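(* Let $U\colon[0,1]^2\to[0,1]$ be a uninorm with neutral element $e\in(0,1)$, $U\in\mathcal U$, and let $a<b$ be idempotent elements of $U$ such that there is no idempotent element of $U$ in $(a,b)$. If there exist $y\in[0,1]$ and $x_1,x_2\in(a,b)$ with $x_1<x_2$ such that $u_{x_1}$ and $u_{x_2}$ are both non-continuous at $y$, then $U$ is pseudo-internal on $[a,b]\times[0,1]$, i.e. $U(x,z)\in\{x,z\}$ for all $(x,z)\in [a,b]\times[0,1]$ with $(x,z)\in[0,e]\times[e,1]\cup[e,1]\times[0,e]$.
   Context: A uninorm is a commutative, associative binary operation on $[0,1]$, non-decreasing in each variable, with a neutral element $e$. Underlying t-norm $T_U(x,y)=U(ex,ey)/e$, underlying t-conorm $C_U(x,y)=(U(e+(1-e)x,e+(1-e)y)-e)/(1-e)$; $\mathcal U$ is the class of uninorms for which both are continuous. For $x\in[0,1]$, $u_x(z)=U(x,z)$. An idempotent element is $x$ with $U(x,x)=x$. $U$ is pseudo-internal (on a set) if it is internal, i.e. $U(x,z)\in\{x,z\}$, at all points of that set lying in $[0,e]\times[e,1]\cup[e,1]\times[0,e]$. *)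

theory Defs
  imports "HOL-Analysis.Analysis"
begin

text \<open>A uninorm on the unit interval with neutral element e. Only values on [0,1] matter.\<close>
definition uninorm :: "(real \<Rightarrow> real \<Rightarrow> real) \<Rightarrow> real \<Rightarrow> bool" where
  "uninorm U e \<longleftrightarrow> e \<in> {0..1} \<and>
     (\<forall>x\<in>{0..1}. \<forall>y\<in>{0..1}. U x y \<in> {0..1}) \<and>
     (\<forall>x\<in>{0..1}. \<forall>y\<in>{0..1}. U x y = U y x) \<and>
     (\<forall>x\<in>{0..1}. \<forall>y\<in>{0..1}. \<forall>z\<in>{0..1}. U (U x y) z = U x (U y z)) \<and>
     (\<forall>x\<in>{0..1}. \<forall>y\<in>{0..1}. \<forall>z\<in>{0..1}. y \<le> z \<longrightarrow> U x y \<le> U x z) \<and>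
     (\<forall>x\<in>{0..1}. U e x = x)"

definition underlying_tnorm :: "(real \<Rightarrow> real \<Rightarrow> real) \<Rightarrow> real \<Rightarrow> real \<Rightarrow> real \<Rightarrow> real" where
  "underlying_tnorm U e x y = U (e * x) (e * y) / e"

definition underlying_tconorm :: "(real \<Rightarrow> real \<Rightarrow> real) \<Rightarrow> real \<Rightarrow> real \<Rightarrow> real \<Rightarrow> real" where
  "underlying_tconorm U e x y = (U (e + (1 - e) * x) (e + (1 - e) * y) - e) / (1 - e)"

definition in_class_U :: "(real \<Rightarrow> real \<Rightarrow> real) \<Rightarrow> real \<Rightarrow> bool" where
  "in_class_U U e \<longleftrightarrow> uninorm U e \<and>
     continuous_on ({0..1} \<times> {0..1}) (\<lambda>(x, y). underlying_tnorm U e x y) \<and>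
     continuous_on ({0..1} \<times> {0..1}) (\<lambda>(x, y). underlying_tconorm U e x y)"

definition idempotent_elem :: "(real \<Rightarrow> real \<Rightarrow> real) \<Rightarrow> real \<Rightarrow> bool" where
  "idempotent_elem U x \<longleftrightarrow> x \<in> {0..1} \<and> U x x = x"

end

theory Submission
  imports Defs
begin

locale uni =
  fixes U :: "real \<Rightarrow> real \<Rightarrow> real" and e :: real
  assumes cls: "in_class_U U e" and e0: "0 < e" and e1: "e < 1"
begin

lemma uninorm: "uninorm U e" using cls by (simp add: in_class_U_def)

lemma rng: "0 \<le> x \<Longrightarrow> x \<le> 1 \<Longrightarrow> 0 \<le> z \<Longrightarrow> z \<le> 1 \<Longrightarrow> 0 \<le> U x z \<and> U x z \<le> 1"
  using uninorm by (auto simp: uninorm_def)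

lemma comm: "0 \<le> x \<Longrightarrow> x \<le> 1 \<Longrightarrow> 0 \<le> z \<Longrightarrow> z \<le> 1 \<Longrightarrow> U x z = U z x"
  using uninorm by (auto simp: uninorm_def)

lemma assoc: "0 \<le> x \<Longrightarrow> x \<le> 1 \<Longrightarrow> 0 \<le> y \<Longrightarrow> y \<le> 1 \<Longrightarrow> 0 \<le> z \<Longrightarrow> z \<le> 1 \<Longrightarrow>
   U (U x y) z = U x (U y z)"
  using uninorm unfolding uninorm_def by (auto)

lemma mono2: "0 \<le> x \<Longrightarrow> x \<le> 1 \<Longrightarrow> 0 \<le> y \<Longrightarrow> y \<le> z \<Longrightarrow> z \<le> 1 \<Longrightarrow> U x y \<le> U x z"
  using uninorm unfolding uninorm_def by (auto)

lemma mono1: "0 \<le> x \<Longrightarrow> x \<le> y \<Longrightarrow> y \<le> 1 \<Longrightarrow> 0 \<le> z \<Longrightarrow> z \<le> 1 \<Longrightarrow> U x z \<le> U y z"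
  using mono2[of z x y] comm by auto

lemma mono: "0 \<le> x \<Longrightarrow> x \<le> x' \<Longrightarrow> x' \<le> 1 \<Longrightarrow> 0 \<le> z \<Longrightarrow> z \<le> z' \<Longrightarrow> z' \<le> 1 \<Longrightarrow> U x z \<le> U x' z'"
  by (meson mono1 mono2 order_trans)

lemma neutl: "0 \<le> x \<Longrightarrow> x \<le> 1 \<Longrightarrow> U e x = x"
proof -
  have "\<forall>x\<in>{0..1}. U e x = x" using uninorm unfolding uninorm_def by blast
  then show "0 \<le> x \<Longrightarrow> x \<le> 1 \<Longrightarrow> U e x = x" by auto
qed

lemma neutr: "0 \<le> x \<Longrightarrow> x \<le> 1 \<Longrightarrow> U x e = x"
  using comm[of x e] neutl[of x] e0 e1 by simp

lemma contT2: "continuous_on ({0..e} \<times> {0..e}) (\<lambda>p. U (fst p) (snd p))"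
proof -
  have c: "continuous_on ({0..1} \<times> {0..1}) (\<lambda>(x, y). underlying_tnorm U e x y)"
    using cls by (simp add: in_class_U_def)
  have f: "continuous_on ({0..e} \<times> {0..e}) (\<lambda>p::real\<times>real. (fst p / e, snd p / e))"
    by (intro continuous_intros) (use e0 in auto)
  have im: "(\<lambda>p::real\<times>real. (fst p / e, snd p / e)) ` ({0..e} \<times> {0..e}) \<subseteq> {0..1} \<times> {0..1}"
    using e0 by auto
  have "continuous_on ({0..e} \<times> {0..e}) (\<lambda>p. e * (\<lambda>(x, y). underlying_tnorm U e x y) (fst p / e, snd p / e))"
    by (intro continuous_intros continuous_on_compose2[OF c f im])
  moreover have "\<And>p. p \<in> {0..e} \<times> {0..e} \<Longrightarrow> e * (\<lambda>(x, y). underlying_tnorm U e x y) (fst p / e, snd p / e) = U (fst p) (snd p)"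
    using e0 by (auto simp: underlying_tnorm_def)
  ultimately show ?thesis using continuous_on_cong by (metis (no_types, lifting))
qed

lemma contC2: "continuous_on ({e..1} \<times> {e..1}) (\<lambda>p. U (fst p) (snd p))"
proof -
  have c: "continuous_on ({0..1} \<times> {0..1}) (\<lambda>(x, y). underlying_tconorm U e x y)"
    using cls by (simp add: in_class_U_def)
  have f: "continuous_on ({e..1} \<times> {e..1}) (\<lambda>p::real\<times>real. ((fst p - e) / (1 - e), (snd p - e)/ (1 - e)))"
    by (intro continuous_intros) (use e1 in auto)
  have im: "(\<lambda>p::real\<times>real. ((fst p - e) / (1 - e), (snd p - e)/ (1 - e))) ` ({e..1} \<times> {e..1}) \<subseteq> {0..1} \<times> {0..1}"
    using e1 by (auto simp: field_simps)
  have "continuous_on ({e..1} \<times> {e..1}) (\<lambda>p. e + (1 - e) * (\<lambda>(x, y). underlying_tconorm U e x y) ((fst p - e) / (1 - e), (snd p - e)/ (1 - e)))"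
    by (intro continuous_intros continuous_on_compose2[OF c f im])
  moreover have "\<And>p. p \<in> {e..1} \<times> {e..1} \<Longrightarrow> e + (1 - e) * (\<lambda>(x, y). underlying_tconorm U e x y) ((fst p - e) / (1 - e), (snd p - e)/ (1 - e)) = U (fst p) (snd p)"
    using e1 by (auto simp: underlying_tconorm_def)
  ultimately show ?thesis using continuous_on_cong by (metis (no_types, lifting))
qed

lemma contTr: "0 \<le> w \<Longrightarrow> w \<le> e \<Longrightarrow> continuous_on {0..e} (U w)"
  by (rule continuous_on_compose2[OF contT2, of _ "\<lambda>s. (w, s)", simplified]) (auto intro!: continuous_intros)

lemma contTl: "0 \<le> w \<Longrightarrow> w \<le> e \<Longrightarrow> continuous_on {0..e} (\<lambda>x. U x w)"
  by (rule continuous_on_compose2[OF contT2, of _ "\<lambda>s. (s, w)", simplified]) (auto intro!: continuous_intros)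

lemma contCr: "e \<le> w \<Longrightarrow> w \<le> 1 \<Longrightarrow> continuous_on {e..1} (U w)"
  by (rule continuous_on_compose2[OF contC2, of _ "\<lambda>s. (w, s)", simplified]) (auto intro!: continuous_intros)

lemma contCl: "e \<le> w \<Longrightarrow> w \<le> 1 \<Longrightarrow> continuous_on {e..1} (\<lambda>x. U x w)"
  by (rule continuous_on_compose2[OF contC2, of _ "\<lambda>s. (s, w)", simplified]) (auto intro!: continuous_intros)

lemma le_arg: "0 \<le> u \<Longrightarrow> u \<le> e \<Longrightarrow> 0 \<le> v \<Longrightarrow> v \<le> 1 \<Longrightarrow> U u v \<le> v"
  using mono1[of u e v] neutl[of v] e0 e1 by auto

lemma ge_arg: "e \<le> u \<Longrightarrow> u \<le> 1 \<Longrightarrow> 0 \<le> v \<Longrightarrow> v \<le> 1 \<Longrightarrow> v \<le> U u v"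
  using mono1[of e u v] neutl[of v] e0 e1 by auto

lemma le_arg2: "0 \<le> u \<Longrightarrow> u \<le> e \<Longrightarrow> 0 \<le> v \<Longrightarrow> v \<le> 1 \<Longrightarrow> U v u \<le> v"
  using le_arg comm e1 by auto

lemma ge_arg2: "e \<le> u \<Longrightarrow> u \<le> 1 \<Longrightarrow> 0 \<le> v \<Longrightarrow> v \<le> 1 \<Longrightarrow> v \<le> U v u"
  using ge_arg comm e0 by auto

lemma U0: "0 \<le> w \<Longrightarrow> w \<le> e \<Longrightarrow> U w 0 = 0"
  using le_arg[of w 0] rng[of w 0] e1 by auto

lemma U1: "e \<le> w \<Longrightarrow> w \<le> 1 \<Longrightarrow> U w 1 = 1"
  using ge_arg[of w 1] rng[of w 1] e0 by auto

lemma ivt_down: assumes "0 \<le> w" "w \<le> e" "0 \<le> v" "v \<le> w" shows "\<exists>s. 0 \<le> s \<and> s \<le> e \<and> U w s = v"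
proof -
  have "\<exists>s. 0 \<le> s \<and> s \<le> e \<and> U w s = v"
    by (rule IVT') (use assms U0 neutr e0 e1 contTr in auto)
  then show ?thesis .
qed

lemma ivt_up: assumes "e \<le> w" "w \<le> 1" "w \<le> v" "v \<le> 1" shows "\<exists>s. e \<le> s \<and> s \<le> 1 \<and> U w s = v"
proof -
  have "\<exists>s. e \<le> s \<and> s \<le> 1 \<and> U w s = v"
    by (rule IVT') (use assms U1 neutr e0 e1 contCr in auto)
  then show ?thesis .
qed

lemma img_down: assumes "0 \<le> x" "x \<le> 1" "0 \<le> z" "z \<le> 1" "U x z \<le> e" "0 \<le> v" "v \<le> U x z"
  shows "\<exists>z'. 0 \<le> z' \<and> z' \<le> 1 \<and> U x z' = v"
proof -
  have r: "0 \<le> U x z" "U x z \<le> 1" using rng assms by auto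
  obtain s where s: "0 \<le> s" "s \<le> e" "U (U x z) s = v" using ivt_down[OF r(1) assms(5) assms(6,7)] by auto
  have "U x (U z s) = v" using assoc[of x z s] s assms e1 by auto
  then show ?thesis using rng[of z s] s assms e1 by (intro exI[of _ "U z s"]) auto
qed

lemma img_up: assumes "0 \<le> x" "x \<le> 1" "0 \<le> z" "z \<le> 1" "e \<le> U x z" "U x z \<le> v" "v \<le> 1"
  shows "\<exists>z'. 0 \<le> z' \<and> z' \<le> 1 \<and> U x z' = v"
proof -
  have r: "0 \<le> U x z" "U x z \<le> 1" using rng assms by auto
  obtain s where s: "e \<le> s" "s \<le> 1" "U (U x z) s = v" using ivt_up[OF assms(5) r(2) assms(6,7)] by auto
  have "U x (U z s) = v" using assoc[of x z s] s assms e0 by auto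
  then show ?thesis using rng[of z s] s assms e0 by (intro exI[of _ "U z s"]) auto
qed

lemma R_up: assumes x: "0 \<le> x" "x \<le> 1" and y: "0 \<le> y0" "y0 \<le> 1" and ge: "e \<le> U x y0" and ep: "\<epsilon> > 0"
  shows "\<exists>\<delta>>0. \<forall>z. 0 \<le> z \<and> z \<le> 1 \<and> y0 \<le> z \<and> z < y0 + \<delta> \<longrightarrow> U x z < U x y0 + \<epsilon>"
proof (cases "U x y0 + \<epsilon>/2 \<le> 1")
  case True
  obtain zr where zr: "0 \<le> zr" "zr \<le> 1" "U x zr = U x y0 + \<epsilon>/2"
    using img_up[OF x y ge _ True] ep by auto
  have "y0 < zr"
  proof (rule ccontr)
    assume "\<not> y0 < zr" then have "U x zr \<le> U x y0" using mono2[of x zr y0] x y zr by auto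
    then show False using zr ep by auto
  qed
  then show ?thesis
  proof (intro exI[of _ "zr - y0"] conjI allI impI)
    fix z assume "0 \<le> z \<and> z \<le> 1 \<and> y0 \<le> z \<and> z < y0 + (zr - y0)"
    then have "U x z \<le> U x zr" using mono2[of x z zr] x zr by auto
    then show "U x z < U x y0 + \<epsilon>" using zr ep by auto
  qed auto
next
  case False
  show ?thesis
  proof (intro exI[of _ 1] conjI allI impI)
    fix z assume "0 \<le> z \<and> z \<le> 1 \<and> y0 \<le> z \<and> z < y0 + 1"
    then have "U x z \<le> 1" using rng x by auto
    then show "U x z < U x y0 + \<epsilon>" using False ep by auto
  qed auto
qed

lemma L_down: assumes x: "0 \<le> x" "x \<le> 1" and y: "0 \<le> y0" "y0 \<le> 1" and le: "U x y0 \<le> e" and ep: "\<epsilon> > 0"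
  shows "\<exists>\<delta>>0. \<forall>z. 0 \<le> z \<and> z \<le> 1 \<and> y0 - \<delta> < z \<and> z \<le> y0 \<longrightarrow> U x y0 - \<epsilon> < U x z"
proof (cases "0 \<le> U x y0 - \<epsilon>/2")
  case True
  obtain zl where zl: "0 \<le> zl" "zl \<le> 1" "U x zl = U x y0 - \<epsilon>/2"
    using img_down[OF x y le True] ep by auto
  have "zl < y0"
  proof (rule ccontr)
    assume "\<not> zl < y0" then have "U x y0 \<le> U x zl" using mono2[of x y0 zl] x y zl by auto
    then show False using zl ep by auto
  qed
  then show ?thesis
  proof (intro exI[of _ "y0 - zl"] conjI allI impI)
    fix z assume "0 \<le> z \<and> z \<le> 1 \<and> y0 - (y0 - zl) < z \<and> z \<le> y0"
    then have "U x zl \<le> U x z" using mono2[of x zl z] x zl by auto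
    then show "U x y0 - \<epsilon> < U x z" using zl ep by auto
  qed auto
next
  case False
  show ?thesis
  proof (intro exI[of _ 1] conjI allI impI)
    fix z assume "0 \<le> z \<and> z \<le> 1 \<and> y0 - 1 < z \<and> z \<le> y0"
    then have "0 \<le> U x z" using rng x by auto
    then show "U x y0 - \<epsilon> < U x z" using False ep by auto
  qed auto
qed

lemma L_up: assumes x: "0 \<le> x" "x \<le> 1" and y: "0 \<le> y0" "y0 \<le> 1" and z0: "0 \<le> z0" "z0 < y0"
  and ge: "e \<le> U x z0" and ep: "\<epsilon> > 0"
  shows "\<exists>\<delta>>0. \<forall>z. 0 \<le> z \<and> z \<le> 1 \<and> y0 - \<delta> < z \<and> z \<le> y0 \<longrightarrow> U x y0 - \<epsilon> < U x z"
proof (cases "U x y0 - \<epsilon>/2 \<le> U x z0")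
  case True
  show ?thesis
  proof (intro exI[of _ "y0 - z0"] conjI allI impI)
    fix z assume "0 \<le> z \<and> z \<le> 1 \<and> y0 - (y0 - z0) < z \<and> z \<le> y0"
    then have "U x z0 \<le> U x z" using mono2[of x z0 z] x z0 by auto
    then show "U x y0 - \<epsilon> < U x z" using True ep by auto
  qed (use z0 in auto)
next
  case False
  have "U x y0 \<le> 1" using rng x y by auto
  obtain zl where zl: "0 \<le> zl" "zl \<le> 1" "U x zl = U x y0 - \<epsilon>/2"
    using img_up[OF x _ _ ge, of "U x y0 - \<epsilon>/2"] False ep z0 y \<open>U x y0 \<le> 1\<close> by auto
  have "zl < y0"
  proof (rule ccontr)
    assume "\<not> zl < y0" then have "U x y0 \<le> U x zl" using mono2[of x y0 zl] x y zl by auto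
    then show False using zl ep by auto
  qed
  then show ?thesis
  proof (intro exI[of _ "y0 - zl"] conjI allI impI)
    fix z assume "0 \<le> z \<and> z \<le> 1 \<and> y0 - (y0 - zl) < z \<and> z \<le> y0"
    then have "U x zl \<le> U x z" using mono2[of x zl z] x zl by auto
    then show "U x y0 - \<epsilon> < U x z" using zl ep by auto
  qed auto
qed

lemma R_down: assumes x: "0 \<le> x" "x \<le> 1" and y: "0 \<le> y0" "y0 \<le> 1" and z0: "y0 < z0" "z0 \<le> 1"
  and le: "U x z0 \<le> e" and ep: "\<epsilon> > 0"
  shows "\<exists>\<delta>>0. \<forall>z. 0 \<le> z \<and> z \<le> 1 \<and> y0 \<le> z \<and> z < y0 + \<delta> \<longrightarrow> U x z < U x y0 + \<epsilon>"
proof (cases "U x z0 \<le> U x y0 + \<epsilon>/2")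
  case True
  show ?thesis
  proof (intro exI[of _ "z0 - y0"] conjI allI impI)
    fix z assume "0 \<le> z \<and> z \<le> 1 \<and> y0 \<le> z \<and> z < y0 + (z0 - y0)"
    then have "U x z \<le> U x z0" using mono2[of x z z0] x z0 by auto
    then show "U x z < U x y0 + \<epsilon>" using True ep by auto
  qed (use z0 in auto)
next
  case False
  have "0 \<le> U x y0" using rng x y by auto
  obtain zr where zr: "0 \<le> zr" "zr \<le> 1" "U x zr = U x y0 + \<epsilon>/2"
    using img_down[OF x _ _ le, of "U x y0 + \<epsilon>/2"] False ep z0 y \<open>0 \<le> U x y0\<close> by auto
  have "y0 < zr"
  proof (rule ccontr)
    assume "\<not> y0 < zr" then have "U x zr \<le> U x y0" using mono2[of x zr y0] x y zr by auto
    then show False using zr ep by auto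
  qed
  then show ?thesis
  proof (intro exI[of _ "zr - y0"] conjI allI impI)
    fix z assume "0 \<le> z \<and> z \<le> 1 \<and> y0 \<le> z \<and> z < y0 + (zr - y0)"
    then have "U x z \<le> U x zr" using mono2[of x z zr] x zr by auto
    then show "U x z < U x y0 + \<epsilon>" using zr ep by auto
  qed auto
qed

lemma cont_from_RL:
  assumes x: "0 \<le> x" "x \<le> 1" and y: "0 \<le> y0" "y0 \<le> 1"
  and R: "\<And>\<epsilon>. \<epsilon> > 0 \<Longrightarrow> \<exists>\<delta>>0. \<forall>z. 0 \<le> z \<and> z \<le> 1 \<and> y0 \<le> z \<and> z < y0 + \<delta> \<longrightarrow> U x z < U x y0 + \<epsilon>"
  and L: "\<And>\<epsilon>. \<epsilon> > 0 \<Longrightarrow> \<exists>\<delta>>0. \<forall>z. 0 \<le> z \<and> z \<le> 1 \<and> y0 - \<delta> < z \<and> z \<le> y0 \<longrightarrow> U x y0 - \<epsilon> < U x z"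
  shows "continuous (at y0 within {0..1}) (U x)"
  unfolding continuous_within_eps_delta
proof (intro allI impI)
  fix \<epsilon> :: real assume ep: "\<epsilon> > 0"
  obtain d1 where d1: "d1 > 0" "\<forall>z. 0 \<le> z \<and> z \<le> 1 \<and> y0 \<le> z \<and> z < y0 + d1 \<longrightarrow> U x z < U x y0 + \<epsilon>"
    using R[OF ep] by auto
  obtain d2 where d2: "d2 > 0" "\<forall>z. 0 \<le> z \<and> z \<le> 1 \<and> y0 - d2 < z \<and> z \<le> y0 \<longrightarrow> U x y0 - \<epsilon> < U x z"
    using L[OF ep] by auto
  show "\<exists>\<delta>>0. \<forall>x'\<in>{0..1}. dist x' y0 < \<delta> \<longrightarrow> dist (U x x') (U x y0) < \<epsilon>"
  proof (intro exI[of _ "min d1 d2"] conjI ballI impI)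
    fix z assume z: "z \<in> {0..1}" "dist z y0 < min d1 d2"
    show "dist (U x z) (U x y0) < \<epsilon>"
    proof (cases "y0 \<le> z")
      case True
      then have "U x y0 \<le> U x z" using mono2[of x y0 z] x y z by auto
      moreover have "U x z < U x y0 + \<epsilon>" using d1 z True by (auto simp: dist_real_def)
      ultimately show ?thesis by (auto simp: dist_real_def)
    next
      case False
      then have "U x z \<le> U x y0" using mono2[of x z y0] x y z by auto
      moreover have "U x y0 - \<epsilon> < U x z" using d2 z False by (auto simp: dist_real_def)
      ultimately show ?thesis by (auto simp: dist_real_def)
    qed
  qed (use d1 d2 in auto)
qed

lemma THR:
  assumes x: "0 \<le> x" "x \<le> 1" and y: "0 \<le> y0" "y0 \<le> 1"
    and nc: "\<not> continuous (at y0 within {0..1}) (U x)"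
  shows "\<forall>z. 0 \<le> z \<and> z < y0 \<longrightarrow> U x z < e" and "\<forall>z. y0 < z \<and> z \<le> 1 \<longrightarrow> e < U x z"
proof -
  show "\<forall>z. 0 \<le> z \<and> z < y0 \<longrightarrow> U x z < e"
  proof (intro allI impI, rule ccontr)
    fix z0 assume z0: "0 \<le> z0 \<and> z0 < y0" and "\<not> U x z0 < e"
    then have ge: "e \<le> U x z0" by auto
    have "e \<le> U x y0" using ge mono2[of x z0 y0] x y z0 by auto
    then have "continuous (at y0 within {0..1}) (U x)"
      using cont_from_RL[OF x y R_up[OF x y] L_up[OF x y _ _ ge]] z0 by auto
    then show False using nc by auto
  qed
  show "\<forall>z. y0 < z \<and> z \<le> 1 \<longrightarrow> e < U x z"
  proof (intro allI impI, rule ccontr)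
    fix z0 assume z0: "y0 < z0 \<and> z0 \<le> 1" and "\<not> e < U x z0"
    then have le: "U x z0 \<le> e" by auto
    have "U x y0 \<le> e" using le mono2[of x y0 z0] x y z0 by auto
    then have "continuous (at y0 within {0..1}) (U x)"
      using cont_from_RL[OF x y R_down[OF x y _ _ le] L_down[OF x y]] z0 by auto
    then show False using nc by auto
  qed
qed

end

context uni begin

lemma idem_low: assumes "0 \<le> i" "i \<le> e" "U i i = i" "0 \<le> v" "v \<le> i" shows "U i v = v"
proof -
  obtain s where s: "0 \<le> s" "s \<le> e" "U i s = v" using ivt_down[of i v] assms by auto
  have "U i v = U (U i i) s" using s assoc[of i i s] assms e1 by auto
  then show ?thesis using assms s by simp
qed

lemma idem_mid: assumes "0 \<le> i" "i \<le> e" "U i i = i" "i \<le> v" "v \<le> e" shows "U i v = i"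
proof -
  have "U i v \<le> i" using le_arg2[of v i] assms e1 by auto
  moreover have "U i i \<le> U i v" using mono2[of i i v] assms e1 by auto
  ultimately show ?thesis using assms by auto
qed

lemma idem_high: assumes "e \<le> i" "i \<le> 1" "U i i = i" "i \<le> v" "v \<le> 1" shows "U i v = v"
proof -
  obtain s where s: "e \<le> s" "s \<le> 1" "U i s = v" using ivt_up[of i v] assms by auto
  have "U i v = U (U i i) s" using s assoc[of i i s] assms e0 by auto
  then show ?thesis using assms s by simp
qed

lemma idem_cmid: assumes "e \<le> i" "i \<le> 1" "U i i = i" "e \<le> v" "v \<le> i" shows "U i v = i"
proof -
  have "i \<le> U i v" using ge_arg2[of v i] assms e0 by auto
  moreover have "U i v \<le> U i i" using mono2[of i v i] assms e0 by auto
  ultimately show ?thesis using assms by auto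
qed

lemma idem_int: assumes "0 \<le> i" "i \<le> e" "U i i = i" "e \<le> z" "z \<le> 1" shows "U i z = i \<or> U i z = z"
proof -
  define w where "w = U i z"
  have w01: "0 \<le> w" "w \<le> 1" using rng[of i z] assms e0 e1 by (auto simp: w_def)
  have iw: "U i w = w" using assoc[of i i z] assms e0 e1 by (auto simp: w_def)
  have wz: "w \<le> z" using le_arg[of i z] assms e0 by (auto simp: w_def)
  have iw2: "i \<le> w" using ge_arg2[of z i] assms e0 by (auto simp: w_def)
  show ?thesis
  proof (cases "e \<le> w")
    case True
    obtain s where s: "e \<le> s" "s \<le> 1" "U w s = z" using ivt_up[of w z] True w01 wz assms by auto
    have "U i z = U (U i w) s" using assoc[of i w s] s w01 assms e0 e1 by auto
    then show ?thesis using iw s by simp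
  next
    case False
    then have "U i w = i" using idem_mid[of i w] assms iw2 by auto
    then show ?thesis using iw w_def by auto
  qed
qed

end

locale caseA = uni +
  fixes a b x1 x2 y :: real
  assumes a0: "0 \<le> a" and be: "b \<le> e" and ab: "a < b"
    and ia: "U a a = a" and ib: "U b b = b"
    and noidem: "\<And>t. a < t \<Longrightarrow> t < b \<Longrightarrow> U t t \<noteq> t"
    and x1a: "a < x1" and x12: "x1 < x2" and x2b: "x2 < b"
    and y01: "0 \<le> y" "y \<le> 1"
    and nc1: "\<not> continuous (at y within {0..1}) (U x1)"
    and nc2: "\<not> continuous (at y within {0..1}) (U x2)"
begin

lemma e01: "0 < e" "e < 1" using e0 e1 by auto

lemma Ua: "a \<le> x \<Longrightarrow> x \<le> e \<Longrightarrow> U x a = a"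
  using idem_mid[of a x] comm[of x a] a0 ab be ia e01 by auto

lemma Ub: "0 \<le> x \<Longrightarrow> x \<le> b \<Longrightarrow> U x b = x"
  using idem_low[of b x] comm[of x b] a0 ab be ib e01 by auto

lemma contK: "a \<le> x \<Longrightarrow> x \<le> e \<Longrightarrow> continuous_on {a..b} (U x)"
  using contTr[of x] a0 be by (auto intro: continuous_on_subset)

lemma contKl: "a \<le> x \<Longrightarrow> x \<le> e \<Longrightarrow> continuous_on {a..b} (\<lambda>t. U t x)"
  using contTl[of x] a0 be by (auto intro: continuous_on_subset)

lemma divK: assumes "a \<le> x" "x \<le> b" "a \<le> v" "v \<le> x" shows "\<exists>m. a \<le> m \<and> m \<le> b \<and> U x m = v"
  by (rule IVT') (use assms Ua Ub[of x] contK a0 be ab in auto)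

lemma arch: assumes x: "a < x" "x < b" and m: "a \<le> m" "m < b" and eq: "U x m = x" shows False
proof -
  define A where "A = {s\<in>{a..b}. U x s = x}"
  have clA: "closed A"
  proof -
    have "closed ({a..b} \<inter> U x -` {x})"
      by (rule continuous_closed_preimage) (use contK[of x] x be in auto)
    moreover have "A = {a..b} \<inter> U x -` {x}" by (auto simp: A_def)
    ultimately show ?thesis by simp
  qed
  have mA: "m \<in> A" using m eq by (auto simp: A_def)
  have bdd: "bdd_below A" by (auto simp: A_def bdd_below_def)
  define m0 where "m0 = Inf A"
  have m0A: "m0 \<in> A" using closed_contains_Inf[OF _ bdd clA] mA by (auto simp: m0_def)
  have m0m: "m0 \<le> m" using cInf_lower[OF mA bdd] by (simp add: m0_def)
  have m0r: "a \<le> m0" "m0 \<le> b" "U x m0 = x" using m0A by (auto simp: A_def)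
  have sq1: "U m0 m0 \<le> m0" using le_arg[of m0 m0] m0r a0 be e01 by auto
  have sq2: "a \<le> U m0 m0" using mono[of a m0 a m0] ia m0r a0 be e01 by auto
  have sqA: "U m0 m0 \<in> A"
  proof -
    have "U x (U m0 m0) = U (U x m0) m0" using assoc[of x m0 m0] x m0r a0 be e01 by auto
    then show ?thesis using m0r sq1 sq2 by (auto simp: A_def)
  qed
  have "m0 \<le> U m0 m0" using cInf_lower[OF sqA bdd] by (simp add: m0_def)
  then have idm: "U m0 m0 = m0" using sq1 by auto
  have "m0 = a" using noidem[of m0] idm m0r m0m m by force
  then show False using m0r Ua[of x] x be by auto
qed

lemma strict: assumes t: "a \<le> t" "t < b" and u: "a \<le> u" "u < u'" "u' \<le> b" and pos: "a < U t u'"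
  shows "U t u < U t u'"
proof -
  obtain m where m: "a \<le> m" "m \<le> b" "U u' m = u" using divK[of u' u] u by auto
  have mb: "m \<noteq> b" using m Ub[of u'] u a0 by auto
  define w where "w = U t u'"
  have wle: "w \<le> t" using le_arg2[of u' t] u t a0 be e01 by (auto simp: w_def)
  have "U t u = U w m" using assoc[of t u' m] m t u a0 be e01 by (auto simp: w_def)
  moreover have "U w m \<le> w" using le_arg2[of m w] m wle t a0 be pos w_def e01 by auto
  moreover have "U w m \<noteq> w" using arch[of w m] pos wle t m mb w_def by auto
  ultimately show ?thesis by (auto simp: w_def)
qed

definition TI :: "real \<Rightarrow> bool" where "TI z \<longleftrightarrow> (\<forall>x. a < x \<and> x < b \<longrightarrow> U x z = x)"
definition TZ :: "real \<Rightarrow> bool" where "TZ z \<longleftrightarrow> (\<forall>x. a < x \<and> x < b \<longrightarrow> U x z = z)"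
definition MM :: "real \<Rightarrow> bool" where "MM z \<longleftrightarrow> (\<forall>x. a < x \<and> x < b \<longrightarrow> x < U x z \<and> U x z < z)"

lemma asc: "0 \<le> x \<Longrightarrow> x \<le> 1 \<Longrightarrow> 0 \<le> m \<Longrightarrow> m \<le> 1 \<Longrightarrow> 0 \<le> z \<Longrightarrow> z \<le> 1 \<Longrightarrow> U (U x m) z = U m (U x z)"
  using assoc[of m x z] comm[of x m] by auto

lemma TRI_I: assumes z: "e \<le> z" "z \<le> 1" and x0: "a < x0" "x0 < b" and fx: "U x0 z = x0" shows "TI z"
  unfolding TI_def
proof (intro allI impI)
  fix x assume x: "a < x \<and> x < b"
  show "U x z = x"
  proof (cases "x \<le> x0")
    case True
    obtain m where m: "a \<le> m" "m \<le> b" "U x0 m = x" using divK[of x0 x] True x x0 by auto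
    have "U x z = U m (U x0 z)" using asc[of x0 m z] m x0 z a0 be e01 by auto
    also have "\<dots> = U m x0" using fx by simp
    also have "\<dots> = x" using comm[of m x0] m x0 a0 be e01 by auto
    finally show ?thesis .
  next
    case False
    define v where "v = U x z"
    have xv: "x \<le> v" using ge_arg2[of z x] z x a0 be e01 by (auto simp: v_def)
    have vz: "v \<le> z" using le_arg[of x z] z x a0 be e01 by (auto simp: v_def)
    show ?thesis
    proof (rule ccontr)
      assume ne: "U x z \<noteq> x"
      then have xv': "x < v" using xv v_def by auto
      obtain m where m: "a \<le> m" "m \<le> b" "U x m = x0" using divK[of x x0] False x x0 by auto
      have ma: "m \<noteq> a" using m Ua[of x] x x0 be by auto
      have mb: "m \<noteq> b" using m Ub[of x] x x0 a0 False by auto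
      have "x0 = U m v" using asc[of x m z] m x z a0 be e01 fx by (auto simp: v_def)
      show False
      proof (cases "v \<le> b")
        case True
        have "U m x < U m v" using strict[of m x v] m ma mb x xv' True \<open>x0 = U m v\<close> x0 by auto
        moreover have "U m x = x0" using comm[of m x] m x a0 be e01 by auto
        ultimately show False using \<open>x0 = U m v\<close> by auto
      next
        case False
        have "U m b \<le> U m v" using mono2[of m b v] m False vz z a0 be e01 by auto
        moreover have "U m b = m" using Ub[of m] m a0 by auto
        moreover have "x0 \<le> m" using le_arg[of x m] m x a0 be e01 by auto
        moreover have "x0 \<noteq> m"
        proof
          assume "x0 = m"
          then have "U x0 x = x0" using m comm[of x m] x a0 be e01 by auto
          then show False using arch[of x0 x] x0 x by auto
        qed
        ultimately show False using \<open>x0 = U m v\<close> by auto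
      qed
    qed
  qed
qed

lemma TRI_Z: assumes z: "e \<le> z" "z \<le> 1" and x0: "a < x0" "x0 < b" and fx: "U x0 z = z" shows "TZ z"
  unfolding TZ_def
proof (rule ccontr)
  assume "\<not> (\<forall>x. a < x \<and> x < b \<longrightarrow> U x z = z)"
  then obtain x where x: "a < x" "x < b" "U x z \<noteq> z" by auto
  define S where "S = {u. a < u \<and> u < b \<and> U u z = z}"
  have up: "\<And>u u'. u \<in> S \<Longrightarrow> u \<le> u' \<Longrightarrow> u' < b \<Longrightarrow> u' \<in> S"
  proof -
    fix u u' assume u: "u \<in> S" "u \<le> u'" "u' < b"
    have "U u z \<le> U u' z" using mono1[of u u' z] u z a0 be e01 by (auto simp: S_def)
    moreover have "U u' z \<le> z" using le_arg[of u' z] u z a0 be e01 by (auto simp: S_def)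
    ultimately show "u' \<in> S" using u by (auto simp: S_def)
  qed
  have x0S: "x0 \<in> S" using x0 fx by (auto simp: S_def)
  have bdd: "bdd_below S" unfolding bdd_below_def S_def by (rule exI[of _ a]) auto
  define c where "c = Inf S"
  have xc: "x \<le> c"
    unfolding c_def
  proof (rule cInf_greatest)
    show "S \<noteq> {}" using x0S by auto
    fix u assume "u \<in> S"
    show "x \<le> u"
    proof (rule ccontr)
      assume "\<not> x \<le> u"
      then have "x \<in> S" using up[of u x] \<open>u \<in> S\<close> x by auto
      then show False using x by (auto simp: S_def)
    qed
  qed
  have cx0: "c \<le> x0" using cInf_lower[OF x0S bdd] by (simp add: c_def)
  have ca: "a < c" "c < b" using xc x cx0 x0 by auto
  have lt: "U c x0 < c"
  proof -
    have "U c x0 \<le> c" using le_arg2[of x0 c] ca x0 a0 be e01 by auto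
    moreover have "U c x0 \<noteq> c" using arch[of c x0] ca x0 by auto
    ultimately show ?thesis by auto
  qed
  have cont: "continuous_on {a..b} (\<lambda>t. U t x0)" using contKl[of x0] x0 be by auto
  then have "continuous (at c within {a..b}) (\<lambda>t. U t x0)"
    using ca continuous_on_eq_continuous_within[of "{a..b}" "\<lambda>t. U t x0"] by auto
  then obtain d where d: "d > 0" "\<forall>t\<in>{a..b}. dist t c < d \<longrightarrow> dist (U t x0) (U c x0) < c - U c x0"
    unfolding continuous_within_eps_delta using lt by (metis diff_gt_0_iff_gt)
  have "Inf S < c + d" using d by (simp add: c_def)
  then obtain u where u: "u \<in> S" "u < c + d" using cInf_lessD[of S "c+d"] x0S by auto
  have cu: "c \<le> u" using cInf_lower[OF u(1) bdd] by (simp add: c_def)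
  have uab: "a < u" "u < b" using u by (auto simp: S_def)
  have "dist (U u x0) (U c x0) < c - U c x0" using d uab cu u by (auto simp: dist_real_def)
  then have ulc: "U u x0 < c" by (auto simp: dist_real_def)
  have uz: "U (U u x0) z = z"
  proof -
    have "U (U u x0) z = U u (U x0 z)" using assoc[of u x0 z] uab x0 z a0 be e01 by auto
    then show ?thesis using fx u by (auto simp: S_def)
  qed
  have uxa: "a \<le> U u x0" using mono[of a u a x0] ia uab x0 a0 be e01 by auto
  show False
  proof (cases "U u x0 = a")
    case True
    then have "U a z = z" using uz by simp
    moreover have "U a z \<le> U x z" using mono1[of a x z] x z a0 be e01 by auto
    moreover have "U x z \<le> z" using le_arg[of x z] x z a0 be e01 by auto
    ultimately show False using x by auto
  next
    case False
    then have "U u x0 \<in> S" using uxa ulc ca uz by (auto simp: S_def)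
    then have "c \<le> U u x0" using cInf_lower[OF _ bdd] by (simp add: c_def)
    then show False using ulc by auto
  qed
qed

lemma TRI: assumes z: "e \<le> z" "z \<le> 1" shows "TI z \<or> TZ z \<or> MM z"
proof -
  have "\<not> TI z \<Longrightarrow> \<not> TZ z \<Longrightarrow> MM z"
    unfolding MM_def
  proof (intro allI impI)
    fix x assume ni: "\<not> TI z" and nz: "\<not> TZ z" and x: "a < x \<and> x < b"
    have "x \<le> U x z" using ge_arg2[of z x] z x a0 be e01 by auto
    moreover have "U x z \<le> z" using le_arg[of x z] z x a0 be e01 by auto
    moreover have "U x z \<noteq> x" using TRI_I[of z x] ni x z by auto
    moreover have "U x z \<noteq> z" using TRI_Z[of z x] nz x z by auto
    ultimately show "x < U x z \<and> U x z < z" by auto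
  qed
  then show ?thesis by auto
qed

lemma Kb: assumes x: "0 \<le> x" "x \<le> b" and z: "0 \<le> z" "z \<le> 1" and v: "b \<le> U x z" "U x z \<le> e"
  shows "U x z = b"
proof -
  have "U x z = U (U x b) z" using Ub[of x] x by simp
  also have "\<dots> = U b (U x z)" using asc[of x b z] x z a0 ab be e01 by auto
  also have "\<dots> = b" using idem_mid[of b "U x z"] v ib a0 ab be by auto
  finally show ?thesis .
qed

lemma MI: assumes z: "e \<le> z" "z \<le> 1" "U z z = z" and m: "MM z" shows False
proof -
  define x where "x = (a + b) / 2"
  have x: "a < x" "x < b" using ab by (auto simp: x_def)
  define v where "v = U x z"
  have mx: "x < v" "v < z" using m x by (auto simp: MM_def v_def)
  have vv: "U v z = v" using assoc[of x z z] x z a0 be e01 by (auto simp: v_def)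
  show False
  proof (cases "e \<le> v")
    case True
    then have "z \<le> U v z" using ge_arg[of v z] z mx e01 by auto
    then show False using vv mx by auto
  next
    case False
    show False
    proof (cases "v < b")
      case True
      then have "v < U v z" using m mx x by (auto simp: MM_def)
      then show False using vv by auto
    next
      case False
      then have vb: "v = b" using Kb[of x z] x z \<open>\<not> e \<le> v\<close> a0 by (auto simp: v_def)
      obtain r where r: "a \<le> r" "r \<le> b" "U x r = (a + x) / 2" using divK[of x "(a+x)/2"] x by auto
      have ra: "r \<noteq> a" using r Ua[of x] x be by auto
      have rb: "r \<noteq> b" using r Ub[of x] x a0 by auto
      define x' where "x' = U x r"
      have x'ab: "a < x'" "x' < b" using r x by (auto simp: x'_def)
      have "U x' z = U r (U x z)" unfolding x'_def by (rule asc) (use x r z a0 be e01 in auto)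
      also have "\<dots> = r" using Ub[of r] r a0 vb v_def comm[of r b] ab be e01 by auto
      finally have x'z: "U x' z = r" .
      have "U r z = U x' (U z z)" using assoc[of x' z z] x'z x'ab z a0 be e01 by auto
      then have "U r z = r" using z x'z by simp
      moreover have "r < U r z" using m r ra rb unfolding MM_def by auto
      ultimately show False by auto
    qed
  qed
qed

end
context caseA begin

lemma x1ab: "x1 < x2" "a < x1" "x1 < b" "a < x2" "x2 < b" "0 \<le> x1" "x1 \<le> 1" "0 \<le> x2" "x2 \<le> 1" "x1 < e" "x2 < e"
  using x1a x12 x2b a0 be e01 by auto

lemma low: assumes "0 \<le> x" "x \<le> x2" "0 \<le> z" "z < y" shows "U x z < e"
proof -
  have "U x2 z < e" using THR(1)[of x2 y] nc2 y01 x1ab assms by auto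
  moreover have "U x z \<le> U x2 z" using mono1[of x x2 z] assms x1ab y01 by auto
  ultimately show ?thesis by auto
qed

lemma high: assumes "x1 \<le> x" "x \<le> 1" "y < z" "z \<le> 1" shows "e < U x z"
proof -
  have "e < U x1 z" using THR(2)[of x1 y] nc1 y01 x1ab assms by auto
  moreover have "U x1 z \<le> U x z" using mono1[of x1 x z] assms x1ab y01 by auto
  ultimately show ?thesis by auto
qed

lemma yge: "e \<le> y"
proof (rule ccontr)
  assume "\<not> e \<le> y"
  then have "e < U x1 e" using high[of x1 e] x1ab e01 by auto
  then show False using neutr[of x1] x1ab by auto
qed

lemma notTZ_low: "e \<le> z \<Longrightarrow> z < y \<Longrightarrow> \<not> TZ z"
  using low[of x2 z] x1ab e01 unfolding TZ_def by force

lemma notTI_high: "y < z \<Longrightarrow> z \<le> 1 \<Longrightarrow> \<not> TI z"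
  using high[of x1 z] x1ab unfolding TI_def by force

lemma TI_down: assumes "TI z" "e \<le> z'" "z' \<le> z" "z \<le> 1" shows "TI z'"
  unfolding TI_def
proof (intro allI impI)
  fix x assume x: "a < x \<and> x < b"
  have "x \<le> U x z'" using ge_arg2[of z' x] assms x a0 be e01 by auto
  moreover have "U x z' \<le> U x z" using mono2[of x z' z] assms x a0 be e01 by auto
  ultimately show "U x z' = x" using assms x unfolding TI_def by force
qed

lemma TZ_up: assumes "TZ z" "e \<le> z" "z \<le> z'" "z' \<le> 1" shows "TZ z'"
  unfolding TZ_def
proof (intro allI impI)
  fix x assume x: "a < x \<and> x < b"
  obtain s where s: "e \<le> s" "s \<le> 1" "U z s = z'" using ivt_up[of z z'] assms by auto
  have "U x z' = U (U x z) s" using assoc[of x z s] s x assms a0 be e01 by auto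
  then show "U x z' = z'" using assms x s unfolding TZ_def by auto
qed

definition xm where "xm = (a + b) / 2"
lemma xm: "a < xm" "xm < b" using ab by (auto simp: xm_def)

lemma MM_TI: "MM z \<Longrightarrow> \<not> TI z" using xm unfolding MM_def TI_def by force
lemma MM_TZ: "MM z \<Longrightarrow> \<not> TZ z" using xm unfolding MM_def TZ_def by force

lemma MM_btw: assumes "MM z1" "MM z2" "e \<le> z1" "z1 \<le> z" "z \<le> z2" "z2 \<le> 1" shows "MM z"
proof -
  have "\<not> TI z" using TI_down[of z z1] assms MM_TI by auto
  moreover have "\<not> TZ z" using TZ_up[of z z2] assms MM_TZ by auto
  ultimately show ?thesis using TRI[of z] assms by auto
qed

lemma MM_low: "e \<le> z \<Longrightarrow> z < y \<Longrightarrow> \<not> MM z \<Longrightarrow> TI z"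
  using TRI[of z] notTZ_low[of z] y01 by auto

lemma MM_e: "\<not> MM e"
proof
  assume "MM e"
  then have "xm < U xm e" using xm unfolding MM_def by auto
  then show False using neutr[of xm] xm a0 be e01 by auto
qed

lemma cont_below: assumes "0 \<le> z" "z < y" shows "continuous (at z within {0..1}) (U x1)"
proof (rule ccontr)
  assume "\<not> continuous (at z within {0..1}) (U x1)"
  then have "e < U x1 ((z + y) / 2)" using THR(2)[of x1 z] assms x1ab y01 by auto
  moreover have "U x1 ((z + y) / 2) < e" using low[of x1 "(z+y)/2"] assms x1ab x12 by auto
  ultimately show False by auto
qed

lemma C_sweep: assumes ex: "e \<le> z0" "z0 < y" "MM z0"
  and big: "\<And>z'. e \<le> z' \<Longrightarrow> z' < y \<Longrightarrow> MM z' \<Longrightarrow> x2 < U x1 z'"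
  shows False
proof -
  define I where "I = {z'. e \<le> z' \<and> z' < y \<and> MM z'}"
  have z0I: "z0 \<in> I" using ex by (auto simp: I_def)
  have bdd: "bdd_below I" unfolding bdd_below_def I_def by (rule exI[of _ e]) auto
  define \<iota> where "\<iota> = Inf I"
  have ie: "e \<le> \<iota>" unfolding \<iota>_def by (rule cInf_greatest) (use z0I in \<open>auto simp: I_def\<close>)
  have iz0: "\<iota> \<le> z0" using cInf_lower[OF z0I bdd] by (simp add: \<iota>_def)
  have below: "\<And>z. e \<le> z \<Longrightarrow> z < \<iota> \<Longrightarrow> U x1 z = x1"
  proof -
    fix z assume z: "e \<le> z" "z < \<iota>"
    have "\<not> MM z"
    proof
      assume "MM z"
      then have "z \<in> I" using z iz0 ex by (auto simp: I_def)
      then show False using cInf_lower[OF _ bdd, of z] z by (simp add: \<iota>_def)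
    qed
    then have "TI z" using MM_low[of z] z iz0 ex by auto
    then show "U x1 z = x1" using x1ab unfolding TI_def by auto
  qed
  have cont: "continuous (at \<iota> within {0..1}) (U x1)" using cont_below[of \<iota>] ie iz0 ex e01 by auto
  show False
  proof (cases "\<iota> \<in> I")
    case True
    then have mi: "MM \<iota>" by (auto simp: I_def)
    then have ine: "\<iota> \<noteq> e" using MM_e by auto
    have bi: "x2 < U x1 \<iota>" using big[of \<iota>] True by (auto simp: I_def)
    obtain d where d: "d > 0" "\<forall>z\<in>{0..1}. dist z \<iota> < d \<longrightarrow> dist (U x1 z) (U x1 \<iota>) < U x1 \<iota> - x1"
    proof -
      have "U x1 \<iota> - x1 > 0" using bi x12 by auto
      then show ?thesis using cont[unfolded continuous_within_eps_delta, rule_format, of "U x1 \<iota> - x1"] that by blast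
    qed
    define z where "z = max e (\<iota> - d / 2)"
    have z: "e \<le> z" "z < \<iota>" "dist z \<iota> < d" using ine ie d by (auto simp: z_def dist_real_def)
    have "U x1 z = x1" using below z by auto
    moreover have "dist (U x1 z) (U x1 \<iota>) < U x1 \<iota> - x1" using d z ie iz0 ex y01 e01 by auto
    ultimately show False by (auto simp: dist_real_def)
  next
    case False
    have "\<not> MM \<iota>" using False ie iz0 ex by (auto simp: I_def)
    then have "TI \<iota>" using MM_low[of \<iota>] ie iz0 ex by auto
    then have ui: "U x1 \<iota> = x1" using x1ab unfolding TI_def by auto
    obtain d where d: "d > 0" "\<forall>z\<in>{0..1}. dist z \<iota> < d \<longrightarrow> dist (U x1 z) (U x1 \<iota>) < x2 - x1"
    proof -
      have "x2 - x1 > 0" using x12 by auto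
      then show ?thesis using cont[unfolded continuous_within_eps_delta, rule_format, of "x2 - x1"] that by blast
    qed
    have "Inf I < \<iota> + d" using d by (simp add: \<iota>_def)
    then obtain z where z: "z \<in> I" "z < \<iota> + d" using cInf_lessD[of I "\<iota> + d"] z0I by auto
    have iz: "\<iota> \<le> z" using cInf_lower[OF z(1) bdd] by (simp add: \<iota>_def)
    have "x2 < U x1 z" using big[of z] z by (auto simp: I_def)
    moreover have "dist (U x1 z) (U x1 \<iota>) < x2 - x1" using d z iz ie y01 e01 by (auto simp: I_def dist_real_def)
    ultimately show False using ui by (auto simp: dist_real_def)
  qed
qed

lemma Ia_big: assumes ny: "U y y \<noteq> y" and z: "e \<le> z'" "z' < y" and m: "MM z'" shows "x2 < U x1 z'"
proof -
  have ye: "e < y"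
  proof (rule ccontr)
    assume "\<not> e < y" then have "y = e" using yge by auto
    then show False using ny neutr[of e] e01 by auto
  qed
  have y1: "y \<le> 1" using y01 by auto
  have gey: "y \<le> U z' y" using ge_arg[of z' y] z y01 e01 by auto
  have gt: "y < U z' y"
  proof (rule ccontr)
    assume "\<not> y < U z' y"
    then have eqy: "U z' y = y" using gey by auto
    define A where "A = {s\<in>{z'..y}. U s y = y}"
    have clA: "closed A"
    proof -
      have "closed ({z'..y} \<inter> (\<lambda>s. U s y) -` {y})"
        by (rule continuous_closed_preimage) (use contCl[of y] z ye y1 in \<open>auto intro: continuous_on_subset\<close>)
      moreover have "A = {z'..y} \<inter> (\<lambda>s. U s y) -` {y}" by (auto simp: A_def)
      ultimately show ?thesis by simp
    qed
    have zA: "z' \<in> A" using eqy z by (auto simp: A_def)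
    have bdd: "bdd_above A" unfolding bdd_above_def A_def by (rule exI[of _ y]) auto
    define m where "m = Sup A"
    have mA: "m \<in> A" using closed_contains_Sup[OF _ bdd clA] zA by (auto simp: m_def)
    have mr: "z' \<le> m" "m \<le> y" "U m y = y" using mA by (auto simp: A_def)
    have sq1: "m \<le> U m m" using ge_arg[of m m] mr z y1 e01 by auto
    have sq2: "U m m \<le> y" using mono2[of m m y] mr z y1 e01 by auto
    have sqA: "U m m \<in> A"
    proof -
      have "U (U m m) y = U m (U m y)" using assoc[of m m y] mr z y1 e01 by auto
      then show ?thesis using mr sq1 sq2 by (auto simp: A_def)
    qed
    have "U m m \<le> m" using cSup_upper[OF sqA bdd] by (simp add: m_def)
    then have idm: "U m m = m" using sq1 by auto
    have my: "m < y" using idm ny mr by (cases "m = y") auto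
    have "\<not> TI m" using TI_down[of m z'] m MM_TI mr z y1 by auto
    moreover have "\<not> TZ m" using notTZ_low[of m] mr z my by auto
    ultimately have "MM m" using TRI[of m] mr z y1 by auto
    then show False using MI[of m] idm mr z y1 by auto
  qed
  have cont: "continuous (at y within {e..1}) (U z')"
    using contCr[of z'] z y1 ye continuous_on_eq_continuous_within[of "{e..1}" "U z'"] by auto
  obtain d where d: "d > 0" "\<forall>s\<in>{e..1}. dist s y < d \<longrightarrow> dist (U z' s) (U z' y) < U z' y - y"
  proof -
    have "U z' y - y > 0" using gt by auto
    then show ?thesis using cont[unfolded continuous_within_eps_delta, rule_format, of "U z' y - y"] that by blast
  qed
  define s where "s = max e (y - d / 2)"
  have s: "e \<le> s" "s < y" "dist s y < d" using ye d by (auto simp: s_def dist_real_def)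
  have "dist (U z' s) (U z' y) < U z' y - y" using d s y1 by auto
  then have zs: "y < U z' s" by (auto simp: dist_real_def)
  have zs1: "U z' s \<le> 1" using rng[of z' s] z s y1 e01 by auto
  define v where "v = U x1 z'"
  have "U v s = U x1 (U z' s)" using assoc[of x1 z' s] z s x1ab y1 e01 by (auto simp: v_def)
  then have hv: "e < U v s" using high[of x1 "U z' s"] zs zs1 x1ab by auto
  show ?thesis
  proof (rule ccontr)
    assume "\<not> x2 < U x1 z'"
    then have vx: "v \<le> x2" by (simp add: v_def)
    have v0: "0 \<le> v" using rng[of x1 z'] z x1ab y1 e01 by (auto simp: v_def)
    have "U v s < e" using low[of v s] vx v0 s e01 by auto
    then show False using hv by auto
  qed
qed

lemma Ib: assumes ny: "U y y \<noteq> y" and noM: "\<And>z'. e \<le> z' \<Longrightarrow> z' < y \<Longrightarrow> \<not> MM z'"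
  and z0: "e \<le> z0" "z0 \<le> 1" "MM z0" shows False
proof -
  have ye: "e < y"
  proof (rule ccontr)
    assume "\<not> e < y" then have "y = e" using yge by auto
    then show False using ny neutr[of e] e01 by auto
  qed
  have y1: "y \<le> 1" using y01 by auto
  have z0y: "y \<le> z0" using noM[of z0] z0 by force
  have gey: "y \<le> U y y" using ge_arg[of y y] ye y1 e01 by auto
  have cont: "continuous (at y within {e..1}) (\<lambda>s. U s y)"
    using contCl[of y] y1 ye continuous_on_eq_continuous_within[of "{e..1}" "\<lambda>s. U s y"] by auto
  obtain d where d: "d > 0" "\<forall>s\<in>{e..1}. dist s y < d \<longrightarrow> dist (U s y) (U y y) < U y y - y"
  proof -
    have "U y y - y > 0" using gey ny by auto
    then show ?thesis using cont[unfolded continuous_within_eps_delta, rule_format, of "U y y - y"] that by blast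
  qed
  define z' where "z' = max e (y - d / 2)"
  have z': "e \<le> z'" "z' < y" "dist z' y < d" using ye d by (auto simp: z'_def dist_real_def)
  have "dist (U z' y) (U y y) < U y y - y" using d z' y1 by auto
  then have gt: "y < U z' y" by (auto simp: dist_real_def)
  have TIz': "TI z'" using MM_low[of z'] noM[of z'] z' by auto
  obtain z where zr: "y \<le> z" "z < U z' y" "z \<le> 1" "MM z"
  proof (cases "z0 < U z' y")
    case True
    then show ?thesis using that z0 z0y by auto
  next
    case False
    define z where "z = (y + U z' y) / 2"
    have zz: "y < z" "z < U z' y" "z \<le> z0" using gt False by (auto simp: z_def)
    have "\<not> TI z" using notTI_high[of z] zz z0 by auto
    moreover have "\<not> TZ z" using TZ_up[of z z0] zz z0 MM_TZ ye by auto
    ultimately have "MM z" using TRI[of z] zz z0 ye by auto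
    then show ?thesis using that[of z] zz z0 by auto
  qed
  have "\<exists>s. e \<le> s \<and> s \<le> y \<and> U z' s = z"
    by (rule IVT') (use zr z' neutr[of z'] ye y1 contCr[of z'] e01 in \<open>auto intro: continuous_on_subset\<close>)
  then obtain s where s: "e \<le> s" "s \<le> y" "U z' s = z" by auto
  have sy: "s < y" using s zr by (cases "s = y") auto
  have TIs: "TI s" using MM_low[of s] noM[of s] s sy by auto
  have "TI z"
    unfolding TI_def
  proof (intro allI impI)
    fix x assume x: "a < x \<and> x < b"
    have "U x z = U (U x z') s" using assoc[of x z' s] s x z' y1 a0 be e01 by auto
    also have "\<dots> = x" using TIz' TIs x unfolding TI_def by auto
    finally show "U x z = x" .
  qed
  then show False using MM_TI zr by auto
qed

lemma IIa_TI: assumes iy: "U y y = y" and ti: "TI y" and z: "e \<le> z'" "z' < y" and m: "MM z'" shows False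
proof -
  have y1: "y \<le> 1" using y01 by auto
  define v where "v = U x1 z'"
  have vx: "x1 < v" using m x1ab unfolding MM_def v_def by auto
  have ve: "v < e" using low[of x1 z'] x1ab x12 z e01 by (auto simp: v_def)
  have zy: "U z' y = y" using idem_cmid[of y z'] comm[of z' y] iy yge y1 z e01 by auto
  have vy: "U v y = x1"
  proof -
    have "U v y = U x1 (U z' y)" using assoc[of x1 z' y] z x1ab y1 e01 by (auto simp: v_def)
    then show ?thesis using zy ti x1ab unfolding TI_def by auto
  qed
  show False
  proof (cases "v < b")
    case True
    then have "U v y = v" using ti vx x1ab unfolding TI_def by auto
    then show False using vy vx by auto
  next
    case False
    then have "v = b" using Kb[of x1 z'] x1ab z y1 ve e01 by (auto simp: v_def)
    then have "U b y = b \<or> U b y = y" using idem_int[of b y] ib a0 ab be yge y1 by auto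
    then show False using vy \<open>v = b\<close> x1ab yge by auto
  qed
qed

lemma IIa_nil: assumes iy: "U y y = y" and tz: "TZ y" and z: "e \<le> z'" "z' < y"
  and s: "e \<le> s" "s < y" "y \<le> U z' s" shows "x2 < U x1 z'"
proof -
  have y1: "y \<le> 1" using y01 by auto
  have "U z' s \<le> U y y" using mono[of z' y s y] z s y1 e01 by auto
  then have zs: "U z' s = y" using s iy by auto
  define v where "v = U x1 z'"
  have "U v s = U x1 (U z' s)" using assoc[of x1 z' s] z s x1ab y1 e01 by (auto simp: v_def)
  then have vs: "U v s = y" using zs tz x1ab unfolding TZ_def by auto
  show ?thesis
  proof (rule ccontr)
    assume "\<not> x2 < U x1 z'"
    then have vx: "v \<le> x2" by (simp add: v_def)
    have v0: "0 \<le> v" using rng[of x1 z'] z x1ab y1 e01 by (auto simp: v_def)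
    have "U v s < e" using low[of v s] vx v0 s e01 by auto
    then show False using vs yge by auto
  qed
qed

lemma strictlike: assumes z: "e \<le> z'" "z' < y" "MM z'" and st: "\<And>s. e \<le> s \<Longrightarrow> s < y \<Longrightarrow> U z' s < y"
  shows False
proof -
  have y1: "y \<le> 1" using y01 by auto
  define P where "P = (\<lambda>n. ((\<lambda>s. U z' s) ^^ n) e)"
  have P0: "P 0 = e" by (simp add: P_def)
  have PS: "\<And>n. P (Suc n) = U z' (P n)" by (simp add: P_def)
  have Pr: "\<And>n. e \<le> P n \<and> P n < y"
  proof -
    fix n show "e \<le> P n \<and> P n < y"
    proof (induction n)
      case 0 then show ?case using P0 z by auto
    next
      case (Suc n)
      have "P n \<le> U z' (P n)" using ge_arg[of z' "P n"] Suc z y1 e01 by auto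
      then show ?case using Suc st[of "P n"] PS by auto
    qed
  qed
  define X where "X = (\<lambda>x n. U x (P n))"
  have X0: "\<And>x. 0 \<le> x \<Longrightarrow> x \<le> 1 \<Longrightarrow> X x 0 = x" using neutr by (simp add: X_def P0)
  have XS: "\<And>x n. 0 \<le> x \<Longrightarrow> x \<le> 1 \<Longrightarrow> X x (Suc n) = U (X x n) z'"
  proof -
    fix x :: real and n :: nat assume x: "0 \<le> x" "x \<le> 1"
    have "X x (Suc n) = U x (U (P n) z')" using PS comm[of z' "P n"] Pr[of n] z y1 e01 by (simp add: X_def)
    also have "\<dots> = U (X x n) z'" using assoc[of x "P n" z'] x Pr[of n] z y1 e01 by (simp add: X_def)
    finally show "X x (Suc n) = U (X x n) z'" .
  qed
  have Xlt: "\<And>x n. 0 \<le> x \<Longrightarrow> x \<le> x2 \<Longrightarrow> X x n < e"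
  proof -
    fix x :: real and n :: nat assume "0 \<le> x" "x \<le> x2"
    then show "X x n < e" using low[of x "P n"] Pr[of n] e01 by (auto simp: X_def)
  qed
  have Xab: "\<And>x n. a < x \<Longrightarrow> x \<le> x2 \<Longrightarrow> a < X x n \<and> X x n \<le> b"
  proof -
    fix x :: real and n :: nat assume x: "a < x" "x \<le> x2"
    show "a < X x n \<and> X x n \<le> b"
    proof (induction n)
      case 0 then show ?case using X0[of x] x x1ab a0 by auto
    next
      case (Suc n)
      have xs: "X x (Suc n) = U (X x n) z'" using XS[of x n] x x1ab a0 by auto
      have ge: "X x n \<le> X x (Suc n)" using xs ge_arg2[of z' "X x n"] Suc z y1 a0 be e01 by auto
      have lt: "X x (Suc n) < e" using Xlt[of x "Suc n"] x a0 by auto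
      have "X x (Suc n) \<le> b"
      proof (rule ccontr)
        assume "\<not> X x (Suc n) \<le> b"
        then have "U (X x n) z' = b" using Kb[of "X x n" z'] xs lt Suc z y1 a0 e01 by auto
        then show False using xs \<open>\<not> X x (Suc n) \<le> b\<close> by auto
      qed
      then show ?case using ge Suc by auto
    qed
  qed
  have Xmono: "\<And>x n. a < x \<Longrightarrow> x \<le> x2 \<Longrightarrow> X x n \<le> X x (Suc n)"
  proof -
    fix x :: real and n :: nat assume x: "a < x" "x \<le> x2"
    have "X x n \<le> U (X x n) z'" using ge_arg2[of z' "X x n"] Xab[OF x, of n] z y1 a0 be e01 by auto
    then show "X x n \<le> X x (Suc n)" using XS[of x n] x x1ab a0 by auto
  qed
  have Xmono2: "\<And>x m n. a < x \<Longrightarrow> x \<le> x2 \<Longrightarrow> m \<le> n \<Longrightarrow> X x m \<le> X x n"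
  proof -
    fix x :: real and m n :: nat assume x: "a < x" "x \<le> x2" and mn: "m \<le> (n::nat)"
    have "incseq (X x)" using Xmono[OF x] by (rule incseq_SucI)
    then show "X x m \<le> X x n" using mn by (simp add: incseq_def)
  qed
  define Lm where "Lm = (\<lambda>x. Sup (range (X x)))"
  have bdd: "\<And>x. a < x \<Longrightarrow> x \<le> x2 \<Longrightarrow> bdd_above (range (X x))"
    unfolding bdd_above_def using Xab by blast
  have Xl: "\<And>x n. a < x \<Longrightarrow> x \<le> x2 \<Longrightarrow> X x n \<le> Lm x"
    unfolding Lm_def using bdd by (auto intro: cSup_upper)
  have lb: "\<And>x. a < x \<Longrightarrow> x \<le> x2 \<Longrightarrow> Lm x \<le> b"
    unfolding Lm_def using Xab by (auto intro: cSup_least)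
  have lge: "\<And>x. a < x \<Longrightarrow> x \<le> x2 \<Longrightarrow> x2 \<le> Lm x"
  proof (rule ccontr)
    fix x :: real assume x: "a < x" "x \<le> x2" and "\<not> x2 \<le> Lm x"
    then have lx: "Lm x < x2" by auto
    define l where "l = Lm x"
    have la: "a < l" using Xl[of x 0] X0[of x] x x1ab a0 by (auto simp: l_def)
    have lmm: "l < U l z'" using z(3) la lx x1ab unfolding MM_def l_def by auto
    have lee: "U l z' < e" using low[of l z'] la lx z a0 e01 by (auto simp: l_def)
    have l01: "0 \<le> l" "l \<le> 1" using la lx x1ab a0 by (auto simp: l_def)
    have zl: "U z' l = U l z'" using comm[of z' l] l01 z y1 e01 by auto
    obtain u where u: "0 \<le> u" "u \<le> 1" "U z' u = (l + U l z') / 2"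
      using img_down[of z' l "(l + U l z') / 2"] zl lee lmm l01 z y1 e01 by auto
    show False
    proof (cases "u < l")
      case True
      then obtain n where n: "u < X x n" using less_cSup_iff[of "range (X x)" u] bdd[OF x] by (auto simp: l_def Lm_def)
      have "U z' u \<le> U z' (X x n)" using mono2[of z' u "X x n"] n u Xab[OF x, of n] z y1 be e01 by auto
      also have "\<dots> = X x (Suc n)" using XS[of x n] comm[of z' "X x n"] Xab[OF x, of n] x x1ab z y1 a0 be e01 by auto
      also have "\<dots> \<le> l" using Xl[OF x] by (simp add: l_def)
      finally show False using u lmm by auto
    next
      case False
      then have "U z' l \<le> U z' u" using mono2[of z' l u] u l01 z y1 e01 by auto
      then show False using u zl lmm by auto
    qed
  qed
  define l2 where "l2 = Lm x2"
  have l2r: "x2 \<le> l2" "l2 \<le> b" using lge[of x2] lb[of x2] x1ab by (auto simp: l2_def)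
  define c where "c = (a + x2) / 2"
  have c: "a < c" "c < x2" using x1ab by (auto simp: c_def)
  have "\<exists>t. a \<le> t \<and> t \<le> b \<and> U t l2 = c"
    by (rule IVT') (use Ua[of l2] Ub[of l2] comm[of a l2] comm[of b l2] l2r c x1ab a0 ab be e01 contKl[of l2] in auto)
  then obtain t0 where t0: "a \<le> t0" "t0 \<le> b" "U t0 l2 = c" by auto
  have t01: "0 \<le> t0" "t0 \<le> 1" using t0 a0 be e01 by auto
  have Xt: "\<And>n. X (U x2 t0) n = U t0 (X x2 n)"
  proof -
    fix n
    show "X (U x2 t0) n = U t0 (X x2 n)" using asc[of x2 t0 "P n"] Pr[of n] t01 x1ab y1 e01 by (auto simp: X_def)
  qed
  have Xle: "\<And>n. U t0 (X x2 n) \<le> c"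
  proof -
    fix n
    have "U t0 (X x2 n) \<le> U t0 l2" using mono2[of t0 "X x2 n" l2] Xl[of x2 n] Xab[of x2 n] t0 t01 l2r x1ab a0 be e01 unfolding l2_def by auto
    then show "U t0 (X x2 n) \<le> c" using t0 by simp
  qed
  have ux: "a \<le> U x2 t0" using mono[of a x2 a t0] ia t0 x1ab a0 be e01 by auto
  have ux2: "U x2 t0 \<le> x2" using le_arg2[of t0 x2] t0 t01 x1ab be e01 by auto
  show False
  proof (cases "a < U x2 t0")
    case True
    have "x2 \<le> Lm (U x2 t0)" using lge[of "U x2 t0"] True ux2 by auto
    moreover have "Lm (U x2 t0) \<le> c"
      unfolding Lm_def using Xt Xle by (auto intro: cSup_least)
    ultimately show False using c by auto
  next
    case False
    then have ua: "U x2 t0 = a" using ux by auto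
    have za: "\<And>n. U t0 (X x2 n) = a"
    proof -
      fix n
      have "U a (P n) = a \<or> U a (P n) = P n" using idem_int[of a "P n"] ia a0 ab be Pr[of n] y1 by auto
      moreover have "U a (P n) < e" using low[of a "P n"] a0 x1ab Pr[of n] e01 by auto
      ultimately have "U a (P n) = a" using Pr[of n] by auto
      then show "U t0 (X x2 n) = a" using Xt[of n] ua by (simp add: X_def)
    qed
    have l2e: "0 \<le> l2" "l2 \<le> e" using l2r x1ab be by auto
    have cont: "continuous (at l2 within {0..e}) (U t0)"
      using contTr[of t0] t0 t01 be l2e continuous_on_eq_continuous_within[of "{0..e}" "U t0"] by auto
    obtain d where d: "d > 0" "\<forall>u\<in>{0..e}. dist u l2 < d \<longrightarrow> dist (U t0 u) (U t0 l2) < c - a"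
    proof -
      have "c - a > 0" using c by auto
      then show ?thesis using cont[unfolded continuous_within_eps_delta, rule_format, of "c - a"] that by blast
    qed
    have "l2 - d < Sup (range (X x2))" using d by (simp add: l2_def Lm_def)
    then obtain n where n: "l2 - d < X x2 n" using less_cSup_iff[of "range (X x2)" "l2 - d"] bdd[of x2] x1ab by auto
    have xn: "0 \<le> X x2 n" "X x2 n \<le> e" "X x2 n \<le> l2" using Xab[of x2 n] Xl[of x2 n] x1ab a0 be by (auto simp: l2_def)
    have "dist (U t0 (X x2 n)) (U t0 l2) < c - a" using d xn n by (auto simp: dist_real_def)
    then show False using za[of n] t0 c by (auto simp: dist_real_def)
  qed
qed

lemma Tsweep: assumes zr: "y < z" "z \<le> 1" "MM z" and D: "a < u0" "u0 < b" "U u0 z < e" shows False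
proof -
  define D where "D = {u. a < u \<and> u < b \<and> U u z < e}"
  have u0D: "u0 \<in> D" using D by (auto simp: D_def)
  have bdd: "bdd_above D" unfolding bdd_above_def D_def by (rule exI[of _ b]) auto
  define \<tau> where "\<tau> = Sup D"
  have Dx1: "\<And>u. u \<in> D \<Longrightarrow> u < x1"
  proof (rule ccontr)
    fix u assume u: "u \<in> D" "\<not> u < x1"
    then have "U x1 z \<le> U u z" using mono1[of x1 u z] zr x1ab be e01 yge by (auto simp: D_def)
    moreover have "e < U x1 z" using high[of x1 z] zr x1ab by auto
    ultimately show False using u by (auto simp: D_def)
  qed
  have tx1: "\<tau> \<le> x1" unfolding \<tau>_def
  proof (rule cSup_least)
    show "D \<noteq> {}" using u0D by auto
    fix u assume "u \<in> D" then show "u \<le> x1" using Dx1 by force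
  qed
  have ta: "a < \<tau>" using cSup_upper[OF u0D bdd] D by (auto simp: \<tau>_def)
  have tb: "\<tau> < b" using tx1 x1ab by auto
  have ze: "e \<le> z" using zr yge by auto
  have below: "\<And>u. a \<le> u \<Longrightarrow> u < \<tau> \<Longrightarrow> U u z < e"
  proof -
    fix u assume u: "a \<le> u" "u < \<tau>"
    then obtain d where d: "d \<in> D" "u < d" using less_cSup_iff[of D u] u0D bdd by (auto simp: \<tau>_def)
    have "U u z \<le> U d z" using mono1[of u d z] u d a0 zr ze be by (auto simp: D_def)
    then show "U u z < e" using d by (auto simp: D_def)
  qed
  have above: "\<And>u. \<tau> < u \<Longrightarrow> u < b \<Longrightarrow> e \<le> U u z"
  proof (rule ccontr)
    fix u assume u: "\<tau> < u" "u < b" "\<not> e \<le> U u z"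
    then have "u \<in> D" using ta by (auto simp: D_def)
    then show False using cSup_upper[OF _ bdd, of u] u by (auto simp: \<tau>_def)
  qed
  have gt: "U x2 \<tau> < \<tau>"
  proof -
    have "U \<tau> x2 \<le> \<tau>" using le_arg2[of x2 \<tau>] ta tb x1ab a0 be e01 by auto
    moreover have "U \<tau> x2 \<noteq> \<tau>" using arch[of \<tau> x2] ta tb x1ab by auto
    moreover have "U \<tau> x2 = U x2 \<tau>" using comm[of \<tau> x2] ta tb x1ab a0 be e01 by auto
    ultimately show ?thesis by auto
  qed
  have "\<exists>h. \<tau> \<le> h \<and> h \<le> b \<and> U x2 h = \<tau>"
    by (rule IVT') (use gt Ub[of x2] x1ab x12 tx1 tb contK[of x2] ta in \<open>auto intro: continuous_on_subset\<close>)
  then obtain h0 where h0: "\<tau> \<le> h0" "h0 \<le> b" "U x2 h0 = \<tau>" by auto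
  have h0t: "\<tau> < h0" using h0 gt by (cases "\<tau> = h0") auto
  have h0b: "h0 < b" using h0 Ub[of x2] x1ab x12 tx1 by (cases "h0 = b") auto
  have x1h0: "U x1 h0 < \<tau>"
  proof -
    have "U h0 x1 < U h0 x2" using strict[of h0 x1 x2] h0 h0t h0b ta x1ab comm[of h0 x2] a0 be e01 by auto
    then show ?thesis using comm[of h0 x1] comm[of h0 x2] h0 h0b ta x1ab a0 be e01 by auto
  qed
  have cont1: "continuous (at h0 within {a..b}) (U x1)"
    using contK[of x1] x1ab h0 h0b ta continuous_on_eq_continuous_within[of "{a..b}" "U x1"] by auto
  obtain d1 where d1: "d1 > 0" "\<forall>h\<in>{a..b}. dist h h0 < d1 \<longrightarrow> dist (U x1 h) (U x1 h0) < \<tau> - U x1 h0"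
  proof -
    have "\<tau> - U x1 h0 > 0" using x1h0 by auto
    then show ?thesis using cont1[unfolded continuous_within_eps_delta, rule_format, of "\<tau> - U x1 h0"] that by blast
  qed
  have hy: "\<And>h. h0 < h \<Longrightarrow> h < b \<Longrightarrow> dist h h0 < d1 \<Longrightarrow> U h z = y"
  proof -
    fix h assume h: "h0 < h" "h < b" "dist h h0 < d1"
    have hab: "a \<le> h" "h \<le> b" "0 \<le> h" "h \<le> 1" using h h0t ta a0 be e01 by auto
    have "dist (U x1 h) (U x1 h0) < \<tau> - U x1 h0" using d1 h hab by auto
    then have u1: "U x1 h < \<tau>" by (auto simp: dist_real_def)
    have u1a: "a \<le> U x1 h" using mono[of a x1 a h] ia x1ab hab a0 by auto
    have u2: "\<tau> < U x2 h"
    proof -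
      have "a < U x2 h" using mono2[of x2 h0 h] h h0 h0t hab x1ab ta a0 by auto
      then show ?thesis using strict[of x2 h0 h] h0 h x1ab hab ta by auto
    qed
    have u2b: "U x2 h < b" using le_arg2[of h x2] hab x1ab be e01 by auto
    have hz1: "0 \<le> U h z" "U h z \<le> 1" using rng[of h z] hab zr ze e01 by auto
    have hze: "e \<le> U h z" using above[of h] h h0t by auto
    show "U h z = y"
    proof (rule ccontr)
      assume "U h z \<noteq> y"
      then consider "y < U h z" | "U h z < y" by linarith
      then show False
      proof cases
        case 1
        then have "e < U x1 (U h z)" using high[of x1 "U h z"] hz1 x1ab by auto
        moreover have "U x1 (U h z) = U (U x1 h) z" using assoc[of x1 h z] hab zr ze x1ab e01 by auto
        moreover have "U (U x1 h) z < e" using below[of "U x1 h"] u1 u1a by auto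
        ultimately show False by auto
      next
        case 2
        then have "U x2 (U h z) < e" using low[of x2 "U h z"] hz1 x1ab by auto
        moreover have "U x2 (U h z) = U (U x2 h) z" using assoc[of x2 h z] hab zr ze x1ab e01 by auto
        moreover have "e \<le> U (U x2 h) z" using above[of "U x2 h"] u2 u2b by auto
        ultimately show False by auto
      qed
    qed
  qed
  define r where "r = min d1 (b - h0) / 3"
  have r: "r > 0" using d1 h0b by (auto simp: r_def)
  define h1 where "h1 = h0 + r"
  define h2 where "h2 = h0 + 2 * r"
  have rr: "3 * r \<le> d1" "3 * r \<le> b - h0" unfolding r_def by (auto simp: min_def)
  have h12: "h0 < h1" "h1 < h2" "h2 < b" "dist h1 h0 < d1" "dist h2 h0 < d1"
    using r rr d1 h0b by (auto simp: h1_def h2_def dist_real_def)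
  have h1y: "U h1 z = y" using hy[of h1] h12 by auto
  have h2y: "U h2 z = y" using hy[of h2] h12 by auto
  have hab: "a \<le> h1" "h1 \<le> b" "a \<le> h2" "h2 \<le> b" using h12 h0t ta by auto
  have eqv: "\<And>x'. 0 \<le> x' \<Longrightarrow> x' \<le> 1 \<Longrightarrow> U (U x' h1) z = U (U x' h2) z"
  proof -
    fix x' :: real assume x': "0 \<le> x'" "x' \<le> 1"
    have "U (U x' h1) z = U x' (U h1 z)" using assoc[of x' h1 z] x' hab zr ze a0 be e01 by auto
    moreover have "U (U x' h2) z = U x' (U h2 z)" using assoc[of x' h2 z] x' hab zr ze a0 be e01 by auto
    ultimately show "U (U x' h1) z = U (U x' h2) z" using h1y h2y by simp
  qed
  have p1: "U x1 h2 < \<tau>"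
  proof -
    have "dist (U x1 h2) (U x1 h0) < \<tau> - U x1 h0" using d1 h12 hab by auto
    then show ?thesis by (auto simp: dist_real_def)
  qed
  have p2: "\<tau> < U x2 h2"
  proof -
    have "a < U x2 h2" using mono2[of x2 h0 h2] h12 h0 h0t hab x1ab ta a0 be e01 by auto
    then show ?thesis using strict[of x2 h0 h2] h0 h12 x1ab hab ta by auto
  qed
  have "\<exists>x3. x1 \<le> x3 \<and> x3 \<le> x2 \<and> U x3 h2 = \<tau>"
    by (rule IVT') (use p1 p2 x12 contKl[of h2] hab h12 x1ab a0 be in \<open>auto intro: continuous_on_subset\<close>)
  then obtain x3 where x3: "x1 \<le> x3" "x3 \<le> x2" "U x3 h2 = \<tau>" by auto
  have x3x2: "x3 < x2" using x3 p2 by (cases "x3 = x2") auto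
  have x3r: "a < x3" "x3 < b" using x3 x3x2 x1ab by auto
  have q1: "U x3 h1 < \<tau>" using strict[of x3 h1 h2] x3r h12 hab x3 ta by auto
  have cont3: "continuous (at x3 within {a..b}) (\<lambda>t. U t h1)"
    using contKl[of h1] hab x3r h12 h0t ta be continuous_on_eq_continuous_within[of "{a..b}" "\<lambda>t. U t h1"] by auto
  obtain d2 where d2: "d2 > 0" "\<forall>t\<in>{a..b}. dist t x3 < d2 \<longrightarrow> dist (U t h1) (U x3 h1) < \<tau> - U x3 h1"
  proof -
    have "\<tau> - U x3 h1 > 0" using q1 by auto
    then show ?thesis using cont3[unfolded continuous_within_eps_delta, rule_format, of "\<tau> - U x3 h1"] that by blast
  qed
  define x4 where "x4 = x3 + min d2 (x2 - x3) / 2"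
  have mm: "min d2 (x2 - x3) \<le> d2" "min d2 (x2 - x3) \<le> x2 - x3" "0 < min d2 (x2 - x3)" using d2 x3x2 by auto
  define m4 where "m4 = min d2 (x2 - x3)"
  have mm': "m4 \<le> d2" "m4 \<le> x2 - x3" "0 < m4" using mm by (auto simp: m4_def)
  have x4e: "x4 = x3 + m4 / 2" by (simp add: x4_def m4_def)
  have x4: "x3 < x4" "x4 < x2" "dist x4 x3 < d2" using mm' unfolding x4e dist_real_def by auto
  have x4r: "a < x4" "x4 < b" "0 \<le> x4" "x4 \<le> 1" using x4 x3r x1ab a0 be e01 by auto
  have q3: "U x4 h1 < \<tau>"
  proof -
    have "dist (U x4 h1) (U x3 h1) < \<tau> - U x3 h1" using d2 x4 x4r by auto
    then show ?thesis by (auto simp: dist_real_def)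
  qed
  have q3a: "a \<le> U x4 h1" using mono[of a x4 a h1] ia x4r hab a0 be e01 by auto
  have q4: "\<tau> < U x4 h2"
  proof -
    have "U h2 x3 = \<tau>" using comm[of h2 x3] x3 hab x3r a0 be e01 by auto
    moreover have "U h2 x4 \<ge> U h2 x3" using mono2[of h2 x3 x4] x4 x4r hab x3r a0 be e01 by auto
    ultimately have "a < U h2 x4" using ta by auto
    then have "U h2 x3 < U h2 x4" using strict[of h2 x3 x4] h12 hab x3r x4 x4r by auto
    then show ?thesis using comm[of h2 x3] comm[of h2 x4] x3 hab x3r x4r a0 be e01 by auto
  qed
  have q4b: "U x4 h2 < b" using le_arg2[of h2 x4] x4r hab be e01 a0 by auto
  have "U (U x4 h1) z < e" using below[of "U x4 h1"] q3 q3a by auto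
  moreover have "e \<le> U (U x4 h2) z" using above[of "U x4 h2"] q4 q4b by auto
  moreover have "U (U x4 h1) z = U (U x4 h2) z" using eqv[of x4] x4r by auto
  ultimately show False by auto
qed

lemma root: assumes iy: "U y y = y" and zr: "y < z" "z \<le> 1" "MM z"
  and nD: "\<And>u x. y < u \<Longrightarrow> u \<le> z \<Longrightarrow> a < x \<Longrightarrow> x < b \<Longrightarrow> e \<le> U x u" shows False
proof -
  have y1: "y \<le> 1" using y01 by auto
  define v0 where "v0 = U xm z"
  have v0z: "v0 < z" using zr(3) xm unfolding MM_def v0_def by auto
  define s0 where "s0 = (max v0 y + z) / 2"
  have s0: "v0 < s0" "y < s0" "s0 < z" using v0z zr by (auto simp: s0_def)
  have s0e: "e \<le> s0" "s0 \<le> 1" using s0 yge zr by auto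
  have ys0: "U y s0 = s0" using idem_high[of y s0] iy yge y1 s0 s0e by auto
  have cont: "continuous (at y within {e..1}) (\<lambda>u. U u s0)"
    using contCl[of s0] s0e yge y1 continuous_on_eq_continuous_within[of "{e..1}" "\<lambda>u. U u s0"] by auto
  obtain d where d: "d > 0" "\<forall>u\<in>{e..1}. dist u y < d \<longrightarrow> dist (U u s0) (U y s0) < z - s0"
  proof -
    have "z - s0 > 0" using s0 by auto
    then show ?thesis using cont[unfolded continuous_within_eps_delta, rule_format, of "z - s0"] that by blast
  qed
  define uc where "uc = min (y + d / 2) ((y + z) / 2)"
  have uc: "y < uc" "uc < z" "dist uc y < d"
  proof -
    have "uc \<le> (y + z) / 2" "uc \<le> y + d / 2" unfolding uc_def by (rule min.cobounded2, rule min.cobounded1)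
    moreover have "y < uc" using d zr by (auto simp: uc_def)
    ultimately show "y < uc" "uc < z" "dist uc y < d" using d zr by (auto simp: dist_real_def)
  qed
  have uce: "e \<le> uc" "uc \<le> 1" using uc yge zr by auto
  have "dist (U uc s0) (U y s0) < z - s0" using d uc uce by auto
  then have ucs: "U uc s0 < z" using ys0 by (auto simp: dist_real_def)
  have "\<exists>\<sigma>. s0 \<le> \<sigma> \<and> \<sigma> \<le> 1 \<and> U uc \<sigma> = z"
    by (rule IVT') (use ucs U1[of uc] uce zr s0e contCr[of uc] in \<open>auto intro: continuous_on_subset\<close>)
  then obtain \<sigma> where sg: "s0 \<le> \<sigma>" "\<sigma> \<le> 1" "U uc \<sigma> = z" by auto
  have sgs: "s0 < \<sigma>" using sg ucs by (cases "s0 = \<sigma>") auto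
  have xe: "e \<le> U xm uc" using nD[of uc xm] uc xm by auto
  have xe1: "U xm uc \<le> 1" using rng[of xm uc] xm uce a0 be e01 by auto
  have "v0 = U (U xm uc) \<sigma>" using assoc[of xm uc \<sigma>] sg uce xm a0 be s0e e01 by (auto simp: v0_def)
  moreover have "\<sigma> \<le> U (U xm uc) \<sigma>" using ge_arg[of "U xm uc" \<sigma>] xe xe1 sg s0e e01 by auto
  ultimately show False using sgs s0 by auto
qed

lemma noMM: assumes z: "e \<le> z" "z \<le> 1" shows "\<not> MM z"
proof
  assume mz: "MM z"
  have y1: "y \<le> 1" using y01 by auto
  show False
  proof (cases "U y y = y")
    case False
    show False
    proof (cases "\<exists>z'. e \<le> z' \<and> z' < y \<and> MM z'")
      case True
      then obtain z0 where "e \<le> z0" "z0 < y" "MM z0" by auto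
      then show False using C_sweep[of z0] Ia_big[OF False] by auto
    next
      case nM: False
      then show False using Ib[OF False _ z mz] by auto
    qed
  next
    case iy: True
    have nmy: "\<not> MM y" using MI[of y] iy yge y1 by auto
    consider "z < y" | "z = y" | "y < z" by linarith
    then show False
    proof cases
      case 1
      have "TI y \<or> TZ y" using TRI[of y] nmy yge y1 by auto
      then show False
      proof
        assume "TI y" then show False using IIa_TI[OF iy _ z(1) 1 mz] by auto
      next
        assume tz: "TZ y"
        show False
        proof (cases "\<exists>z'. e \<le> z' \<and> z' < y \<and> MM z' \<and> (\<forall>s. e \<le> s \<and> s < y \<longrightarrow> U z' s < y)")
          case True
          then obtain z' where "e \<le> z'" "z' < y" "MM z'" "\<forall>s. e \<le> s \<and> s < y \<longrightarrow> U z' s < y" by auto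
          then show False using strictlike[of z'] by auto
        next
          case False
          have big: "\<And>z'. e \<le> z' \<Longrightarrow> z' < y \<Longrightarrow> MM z' \<Longrightarrow> x2 < U x1 z'"
          proof -
            fix z' assume z': "e \<le> z'" "z' < y" "MM z'"
            then obtain s where s: "e \<le> s" "s < y" "\<not> U z' s < y" using False by auto
            then show "x2 < U x1 z'" using IIa_nil[OF iy tz z'(1,2) s(1,2)] by auto
          qed
          show False using C_sweep[of z] big z 1 mz by auto
        qed
      qed
    next
      case 2 then show False using nmy mz by auto
    next
      case 3
      have mu: "\<And>u. y < u \<Longrightarrow> u \<le> z \<Longrightarrow> MM u"
      proof -
        fix u assume u: "y < u" "u \<le> z"
        have "\<not> TI u" using notTI_high[of u] u z by auto
        moreover have "\<not> TZ u" using TZ_up[of u z] u z MM_TZ[OF mz] yge by auto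
        ultimately show "MM u" using TRI[of u] u z yge by auto
      qed
      have nD: "\<And>u x. y < u \<Longrightarrow> u \<le> z \<Longrightarrow> a < x \<Longrightarrow> x < b \<Longrightarrow> e \<le> U x u"
      proof (rule ccontr)
        fix u x assume u: "y < u" "u \<le> z" "a < x" "x < b" "\<not> e \<le> U x u"
        then show False using Tsweep[of u x] mu[of u] z by auto
      qed
      show False using root[OF iy 3 z(2) mz nD] by auto
    qed
  qed
qed

lemma caseA_concl: "\<forall>x\<in>{a..b}. \<forall>z\<in>{0..1}. ((x \<le> e \<and> e \<le> z) \<or> (e \<le> x \<and> z \<le> e)) \<longrightarrow> U x z \<in> {x, z}"
proof (intro ballI impI)
  fix x z assume x: "x \<in> {a..b}" and z: "z \<in> {0..1}" and c: "(x \<le> e \<and> e \<le> z) \<or> (e \<le> x \<and> z \<le> e)"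
  show "U x z \<in> {x, z}"
  proof (cases "e \<le> x")
    case True
    then have "x = e" using x be by auto
    then show ?thesis using neutl[of z] z by auto
  next
    case False
    then have ez: "e \<le> z" using c by auto
    show ?thesis
    proof (cases "x = a \<or> x = b")
      case True
      then show ?thesis using idem_int[of x z] ia ib a0 ab be ez z by auto
    next
      case False
      then have xr: "a < x" "x < b" using x by auto
      have "TI z \<or> TZ z" using TRI[of z] noMM[of z] ez z by auto
      then show ?thesis using xr unfolding TI_def TZ_def by auto
    qed
  qed
qed

end

lemma refl_cont:
  assumes "continuous (at (1 - y) within {0..1}) (\<lambda>z. 1 - f (1 - z))"
  shows "continuous (at y within {0..1}) (f :: real \<Rightarrow> real)"
  unfolding continuous_within_eps_delta
proof (intro allI impI)
  fix \<epsilon> :: real assume ep: "\<epsilon> > 0"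
  obtain d where d: "d > 0" "\<forall>x'\<in>{0..1}. dist x' (1 - y) < d \<longrightarrow> dist (1 - f (1 - x')) (1 - f (1 - (1 - y))) < \<epsilon>"
    using assms[unfolded continuous_within_eps_delta, rule_format, OF ep] by blast
  show "\<exists>\<delta>>0. \<forall>x'\<in>{0..1}. dist x' y < \<delta> \<longrightarrow> dist (f x') (f y) < \<epsilon>"
  proof (intro exI[of _ d] conjI ballI impI)
    fix x' :: real assume x': "x' \<in> {0..1}" "dist x' y < d"
    have "dist (1 - f (1 - (1 - x'))) (1 - f (1 - (1 - y))) < \<epsilon>"
      using d(2)[rule_format, of "1 - x'"] x' by (auto simp: dist_real_def)
    then show "dist (f x') (f y) < \<epsilon>" by (auto simp: dist_real_def)
  qed (use d in auto)
qed

definition reflU :: "(real \<Rightarrow> real \<Rightarrow> real) \<Rightarrow> real \<Rightarrow> real \<Rightarrow> real" where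
  "reflU U x z = 1 - U (1 - x) (1 - z)"

lemma refl_class: assumes "in_class_U U e" "0 < e" "e < 1" shows "in_class_U (reflU U) (1 - e)"
proof -
  interpret uni U e using assms by unfold_locales
  have un: "uninorm (reflU U) (1 - e)"
    unfolding uninorm_def reflU_def
  proof (intro conjI ballI impI)
    show "1 - e \<in> {0..1}" using assms by auto
  next
    fix x y :: real assume "x \<in> {0..1}" "y \<in> {0..1}"
    then show "1 - U (1 - x) (1 - y) \<in> {0..1}" using rng[of "1-x" "1-y"] by auto
  next
    fix x y :: real assume "x \<in> {0..1}" "y \<in> {0..1}"
    then show "1 - U (1 - x) (1 - y) = 1 - U (1 - y) (1 - x)" using comm[of "1-x" "1-y"] by auto
  next
    fix x y z :: real assume "x \<in> {0..1}" "y \<in> {0..1}" "z \<in> {0..1}"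
    then show "1 - U (1 - (1 - U (1 - x) (1 - y))) (1 - z) = 1 - U (1 - x) (1 - (1 - U (1 - y) (1 - z)))"
      using assoc[of "1-x" "1-y" "1-z"] by auto
  next
    fix x y z :: real assume "x \<in> {0..1}" "y \<in> {0..1}" "z \<in> {0..1}" "y \<le> z"
    then show "1 - U (1 - x) (1 - y) \<le> 1 - U (1 - x) (1 - z)" using mono2[of "1-x" "1-z" "1-y"] by auto
  next
    fix x :: real assume "x \<in> {0..1}"
    then show "1 - U (1 - (1 - e)) (1 - x) = x" using neutl[of "1-x"] by auto
  qed
  have tn: "continuous_on ({0..1} \<times> {0..1}) (\<lambda>(x, y). underlying_tnorm (reflU U) (1 - e) x y)"
  proof -
    have c: "continuous_on ({0..1} \<times> {0..1}) (\<lambda>(x, y). underlying_tconorm U e x y)"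
      using assms by (simp add: in_class_U_def)
    have f: "continuous_on ({0..1} \<times> {0..1}) (\<lambda>p::real\<times>real. (1 - fst p, 1 - snd p))"
      by (intro continuous_intros)
    have im: "(\<lambda>p::real\<times>real. (1 - fst p, 1 - snd p)) ` ({0..1} \<times> {0..1}) \<subseteq> {0..1} \<times> {0..1}" by auto
    have "continuous_on ({0..1} \<times> {0..1}) (\<lambda>p. 1 - (\<lambda>(x, y). underlying_tconorm U e x y) (1 - fst p, 1 - snd p))"
      by (intro continuous_intros continuous_on_compose2[OF c f im])
    moreover have "\<And>p. 1 - (\<lambda>(x, y). underlying_tconorm U e x y) (1 - fst p, 1 - snd p) = (\<lambda>(x, y). underlying_tnorm (reflU U) (1 - e) x y) p"
    proof -
      fix p :: "real \<times> real"
      obtain x y where p: "p = (x, y)" by fastforce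
      have "1 - (1 - e) * x = e + (1 - e) * (1 - x)" "1 - (1 - e) * y = e + (1 - e) * (1 - y)" by (auto simp: algebra_simps)
      then show "1 - (\<lambda>(x, y). underlying_tconorm U e x y) (1 - fst p, 1 - snd p) = (\<lambda>(x, y). underlying_tnorm (reflU U) (1 - e) x y) p"
        using assms p by (auto simp: underlying_tconorm_def underlying_tnorm_def reflU_def field_simps)
    qed
    ultimately show ?thesis by simp
  qed
  have tc: "continuous_on ({0..1} \<times> {0..1}) (\<lambda>(x, y). underlying_tconorm (reflU U) (1 - e) x y)"
  proof -
    have c: "continuous_on ({0..1} \<times> {0..1}) (\<lambda>(x, y). underlying_tnorm U e x y)"
      using assms by (simp add: in_class_U_def)
    have f: "continuous_on ({0..1} \<times> {0..1}) (\<lambda>p::real\<times>real. (1 - fst p, 1 - snd p))"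
      by (intro continuous_intros)
    have im: "(\<lambda>p::real\<times>real. (1 - fst p, 1 - snd p)) ` ({0..1} \<times> {0..1}) \<subseteq> {0..1} \<times> {0..1}" by auto
    have "continuous_on ({0..1} \<times> {0..1}) (\<lambda>p. 1 - (\<lambda>(x, y). underlying_tnorm U e x y) (1 - fst p, 1 - snd p))"
      by (intro continuous_intros continuous_on_compose2[OF c f im])
    moreover have "\<And>p. 1 - (\<lambda>(x, y). underlying_tnorm U e x y) (1 - fst p, 1 - snd p) = (\<lambda>(x, y). underlying_tconorm (reflU U) (1 - e) x y) p"
    proof -
      fix p :: "real \<times> real"
      obtain x y where p: "p = (x, y)" by fastforce
      have "1 - (1 - e + (1 - (1 - e)) * x) = e * (1 - x)" "1 - (1 - e + (1 - (1 - e)) * y) = e * (1 - y)" by (auto simp: algebra_simps)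
      then show "1 - (\<lambda>(x, y). underlying_tnorm U e x y) (1 - fst p, 1 - snd p) = (\<lambda>(x, y). underlying_tconorm (reflU U) (1 - e) x y) p"
        using assms p by (auto simp: underlying_tconorm_def underlying_tnorm_def reflU_def field_simps)
    qed
    ultimately show ?thesis by simp
  qed
  show ?thesis using un tn tc by (simp add: in_class_U_def)
qed

theorem lemma10:
  fixes U :: "real \<Rightarrow> real \<Rightarrow> real" and e a b :: real
  assumes "in_class_U U e" and "0 < e" and "e < 1"
    and "idempotent_elem U a" and "idempotent_elem U b" and "a < b"
    and "\<forall>t\<in>{a<..<b}. \<not> idempotent_elem U t"
    and "y \<in> {0..1}" and "x1 \<in> {a<..<b}" and "x2 \<in> {a<..<b}" and "x1 < x2"
    and "\<not> continuous (at y within {0..1}) (U x1)"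
    and "\<not> continuous (at y within {0..1}) (U x2)"
  shows "\<forall>x\<in>{a..b}. \<forall>z\<in>{0..1}.
           ((x \<le> e \<and> e \<le> z) \<or> (e \<le> x \<and> z \<le> e)) \<longrightarrow> U x z \<in> {x, z}"
proof -
  interpret uni U e using assms(1-3) by unfold_locales
  have ab: "0 \<le> a" "a \<le> 1" "U a a = a" "0 \<le> b" "b \<le> 1" "U b b = b"
    using assms(4,5) by (auto simp: idempotent_elem_def)
  have noid: "\<And>t. a < t \<Longrightarrow> t < b \<Longrightarrow> U t t \<noteq> t"
    using assms(7) ab by (auto simp: idempotent_elem_def)
  have ee: "U e e = e" using neutl[of e] assms by auto
  have "b \<le> e \<or> e \<le> a"
  proof (rule ccontr)
    assume "\<not> (b \<le> e \<or> e \<le> a)"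
    then show False using noid[of e] ee by auto
  qed
  then show ?thesis
  proof
    assume be: "b \<le> e"
    have "caseA U e a b x1 x2 y"
      by (rule caseA.intro, unfold_locales) (use assms ab noid be in auto)
    then show ?thesis by (rule caseA.caseA_concl)
  next
    assume ea: "e \<le> a"
    have cl: "in_class_U (reflU U) (1 - e)" using refl_class assms by auto
    have nc: "\<And>x. \<not> continuous (at y within {0..1}) (U x) \<Longrightarrow> \<not> continuous (at (1 - y) within {0..1}) (reflU U (1 - x))"
    proof
      fix x assume "\<not> continuous (at y within {0..1}) (U x)" "continuous (at (1 - y) within {0..1}) (reflU U (1 - x))"
      moreover have "reflU U (1 - x) = (\<lambda>z. 1 - U x (1 - z))" by (simp add: reflU_def fun_eq_iff)
      ultimately show False using refl_cont[of y "U x"] by simp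
    qed
    have "caseA (reflU U) (1 - e) (1 - b) (1 - a) (1 - x2) (1 - x1) (1 - y)"
    proof (rule caseA.intro)
      show "uni (reflU U) (1 - e)" using cl assms by unfold_locales auto
      show "caseA_axioms (reflU U) (1 - e) (1 - b) (1 - a) (1 - x2) (1 - x1) (1 - y)"
      proof
        fix t assume "1 - b < t" "t < 1 - a"
        then show "reflU U t t \<noteq> t" using noid[of "1 - t"] by (auto simp: reflU_def)
      qed (use assms ab ea nc in \<open>auto simp: reflU_def\<close>)
    qed
    then have c: "\<forall>x\<in>{1-b..1-a}. \<forall>z\<in>{0..1}. ((x \<le> 1 - e \<and> 1 - e \<le> z) \<or> (1 - e \<le> x \<and> z \<le> 1 - e)) \<longrightarrow> reflU U x z \<in> {x, z}"
      by (rule caseA.caseA_concl)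
    show ?thesis
    proof (intro ballI impI)
      fix x z assume x: "x \<in> {a..b}" and z: "z \<in> {0..1}" and cnd: "(x \<le> e \<and> e \<le> z) \<or> (e \<le> x \<and> z \<le> e)"
      have "reflU U (1 - x) (1 - z) \<in> {1 - x, 1 - z}" using c[rule_format, of "1 - x" "1 - z"] x z cnd by auto
      then show "U x z \<in> {x, z}" by (auto simp: reflU_def)
    qed
  qed
qed


end
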